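(* Let $f$ be a maximal coupling function for the kernel $p$ on the alphabet $G$, assume $a_1>0$ and $a_k\uparrow1$, let $\mathbf{U}=\{U_i\}_{i\in\mathbf{Z}}$ be i.i.d. uniform on $[0,1)$, and define $$\tau_0=\sup\Big\{m<0:\exists\, l\in[m,0]\ \text{such that}\ \big(U_l/a_1,\dots,U_m/a_1\big)\in E_{l-m+1}\ \text{and, if } l<0,\ K(U_j)\le j-l\ \text{for all } j\in[l+1,0]\Big\}.$$ Suppose (i) $\sum_{n=1}^\infty\prod_{m=1}^n a_m=\infty$; (ii) there exists $s\in\mathbf{N}^*$ such that $P\big((U_{s-1},\dots,U_0)\in E_s\big)>0$. Then $\tau_0$ is finite almost surely.
   Context: $G$ finite or countable; histories $\mathbf{w}=(w_{-1},w_{-2},\dots)\in G^{-\mathbf{N}^*}$; kernel $p(g|\mathbf{w})$ measurable in $\mathbf{w}$, summing to 1 over $g$. Admissible histories $\mathcal{H}$: a letter $g$ is forbidden if $p(g|\mathbf{w})=0$ for all $\mathbf{w}$; a word $(s_0,\dots,s_{-n})$ is forbidden if $(s_{-1},\dots,s_{-n})$ is forbidden or $p(s_0|\mathbf{w})=0$ for all histories beginning with $(s_{-1},\dots,s_{-n})$; $\mathbf{w}\in\mathcal{H}$ iff no initial word is forbidden. $a_0(g)=\inf\{p(g|\mathbf{z}):\mathbf{z}\in\mathcal{H}\}$; for $k\ge1$, $a_k(g|w_{-1},\dots,w_{-k})=\inf\{p(g|\mathbf{z}):\mathbf{z}\in\mathcal{H},(z_{-1},\dots,z_{-k})=(w_{-1},\dots,w_{-k})\}$;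 $b_k=a_k-a_{k-1}$ ($a_{-1}\equiv0$); $a_k(w_{-1},\dots,w_{-k})=\sum_ga_k(g|\cdot)$; $a_0=\sum_ga_0(g)$; $a_k=\inf_{\mathbf{w}\in\mathcal{H}}a_k(w_{-1},\dots,w_{-k})$. Maximal coupling function $f:[0,1)\times\mathcal{H}\to G$: $[a_{k-1}(w_{-1},\dots,w_{-k+1}),a_k(w_{-1},\dots,w_{-k}))$ is partitioned into intervals $B_k(g|w_{-1},\dots,w_{-k})$ of length $b_k(g|\cdot)$, $g\in G$, and $f(u|\mathbf{w})=g$ on $\bigcup_kB_k(g|\cdot)$. Markovian coupling: $\tilde f(u|w)=f(a_1u|\mathbf{w})$ for $u\in[0,1)$, $w\in G$, any $\mathbf{w}\in\mathcal{H}$ with $w_{-1}=w$; $\tilde f^{(1)}=\tilde f$, $\tilde f^{(n)}(u_n,\dots,u_1|w)=\tilde f(u_n|\tilde f^{(n-1)}(u_{n-1},\dots,u_1|w))$. For fixed $g_0\in G$, $E_n=\{(u_0,u_{-1},\dots,u_{-n+1})\in[0,1)^n:\tilde f^{(n)}(u_0,\dots,u_{-n+1}|w)=\tilde f^{(n)}(u_0,\dots,u_{-n+1}|g_0)\ \forall w\in G\}$; in (ii), $(U_{s-1},\dots,U_0)$ is the point $(u_0,\dots,u_{-s+1})=(U_{s-1},\dots,U_0)$. $K(u)=\inf\{k\in\mathbf{N}:a_k>u\}$. *)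

theory Defs
  imports "HOL-Probability.Probability"
begin

text \<open>Alphabet: a countable type 'g. A history (w_{-1}, w_{-2}, ...) is encoded as
  w :: nat \<Rightarrow> 'g with w i = w_{-(i+1)}. The kernel is p g w = p(g | w).\<close>

text \<open>A word (s_0, s_{-1}, ..., s_{-n}) is the list [s_0, s_{-1}, ..., s_{-n}].
  The empty word is not forbidden; for n = 0 the clause reduces to
  "p(s_0 | w) = 0 for all w", i.e. s_0 is a forbidden letter.\<close>
fun forbidden :: "('g \<Rightarrow> (nat \<Rightarrow> 'g) \<Rightarrow> real) \<Rightarrow> 'g list \<Rightarrow> bool" where
  "forbidden p [] = False"
| "forbidden p (s # t) =
     (forbidden p t \<or> (\<forall>w. (\<forall>i<length t. w i = t ! i) \<longrightarrow> p s w = 0))"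

definition admissible :: "('g \<Rightarrow> (nat \<Rightarrow> 'g) \<Rightarrow> real) \<Rightarrow> (nat \<Rightarrow> 'g) set" where
  "admissible p = {w. \<forall>n. \<not> forbidden p (map w [0..<n])}"

definition aK :: "('g \<Rightarrow> (nat \<Rightarrow> 'g) \<Rightarrow> real) \<Rightarrow> nat \<Rightarrow> 'g \<Rightarrow> (nat \<Rightarrow> 'g) \<Rightarrow> real" where
  "aK p k g w = (INF z \<in> {z \<in> admissible p. \<forall>i<k. z i = w i}. p g z)"

definition bK :: "('g \<Rightarrow> (nat \<Rightarrow> 'g) \<Rightarrow> real) \<Rightarrow> nat \<Rightarrow> 'g \<Rightarrow> (nat \<Rightarrow> 'g) \<Rightarrow> real" where
  "bK p k g w = aK p k g w - (if k = 0 then 0 else aK p (k - 1) g w)"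

definition aW :: "('g \<Rightarrow> (nat \<Rightarrow> 'g) \<Rightarrow> real) \<Rightarrow> nat \<Rightarrow> (nat \<Rightarrow> 'g) \<Rightarrow> real" where
  "aW p k w = (\<Sum>\<^sub>\<infinity>g. aK p k g w)"

definition aPrev :: "('g \<Rightarrow> (nat \<Rightarrow> 'g) \<Rightarrow> real) \<Rightarrow> nat \<Rightarrow> (nat \<Rightarrow> 'g) \<Rightarrow> real" where
  "aPrev p k w = (if k = 0 then 0 else aW p (k - 1) w)"

definition aS :: "('g \<Rightarrow> (nat \<Rightarrow> 'g) \<Rightarrow> real) \<Rightarrow> nat \<Rightarrow> real" where
  "aS p k = (INF w \<in> admissible p. aW p k w)"

definition max_coupling ::
  "('g \<Rightarrow> (nat \<Rightarrow> 'g) \<Rightarrow> real) \<Rightarrow> (real \<Rightarrow> (nat \<Rightarrow> 'g) \<Rightarrow> 'g) \<Rightarrow> bool" where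
  "max_coupling p f =
    (\<exists>B :: nat \<Rightarrow> 'g \<Rightarrow> (nat \<Rightarrow> 'g) \<Rightarrow> real set.
      (\<forall>k g w w'. w \<in> admissible p \<longrightarrow> w' \<in> admissible p \<longrightarrow> (\<forall>i<k. w i = w' i)
          \<longrightarrow> B k g w = B k g w') \<and>
      (\<forall>k g w. w \<in> admissible p \<longrightarrow>
          is_interval (B k g w) \<and> measure lborel (B k g w) = bK p k g w) \<and>
      (\<forall>k w. w \<in> admissible p \<longrightarrow>
          disjoint_family (\<lambda>g. B k g w) \<and> (\<Union>g. B k g w) = {aPrev p k w ..< aW p k w}) \<and>
      (\<forall>w \<in> admissible p. \<forall>u \<in> {0..<1}. \<forall>k g. u \<in> B k g w \<longrightarrow> f u w = g))"

definition G0 :: "('g \<Rightarrow> (nat \<Rightarrow> 'g) \<Rightarrow> real) \<Rightarrow> 'g set" where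
  "G0 p = {g. \<exists>z \<in> admissible p. z 0 = g}"

definition ftil :: "('g \<Rightarrow> (nat \<Rightarrow> 'g) \<Rightarrow> real) \<Rightarrow> (real \<Rightarrow> (nat \<Rightarrow> 'g) \<Rightarrow> 'g) \<Rightarrow> real \<Rightarrow> 'g \<Rightarrow> 'g" where
  "ftil p f u g = f (aS p 1 * u) (SOME z. z \<in> admissible p \<and> z 0 = g)"

text \<open>Iterate: v i = u_{-i}; fiter n v w = \<tilde>f^{(n)}(u_0, u_{-1}, ..., u_{-n+1} | w),
  where u_{-n+1} is applied first and u_0 last.\<close>
primrec fiter :: "('g \<Rightarrow> (nat \<Rightarrow> 'g) \<Rightarrow> real) \<Rightarrow> (real \<Rightarrow> (nat \<Rightarrow> 'g) \<Rightarrow> 'g) \<Rightarrow> nat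
    \<Rightarrow> (nat \<Rightarrow> real) \<Rightarrow> 'g \<Rightarrow> 'g" where
  "fiter p f 0 v g = g"
| "fiter p f (Suc n) v g = ftil p f (v 0) (fiter p f n (\<lambda>i. v (Suc i)) g)"

text \<open>E_n, with the point (u_0, ..., u_{-n+1}) encoded as v with v i = u_{-i} (i < n).\<close>
definition E :: "('g \<Rightarrow> (nat \<Rightarrow> 'g) \<Rightarrow> real) \<Rightarrow> (real \<Rightarrow> (nat \<Rightarrow> 'g) \<Rightarrow> 'g) \<Rightarrow> nat \<Rightarrow> (nat \<Rightarrow> real) set" where
  "E p f n = {v. (\<forall>i<n. 0 \<le> v i \<and> v i < 1) \<and>
      (\<forall>g \<in> G0 p. \<forall>g' \<in> G0 p. fiter p f n v g = fiter p f n v g')}"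

definition Kfun :: "('g \<Rightarrow> (nat \<Rightarrow> 'g) \<Rightarrow> real) \<Rightarrow> real \<Rightarrow> nat" where
  "Kfun p u = (LEAST k. aS p k > u)"

text \<open>tau_0 (as an extended real; Sup of the empty set is -\<infinity>).\<close>
definition tau0 :: "('g \<Rightarrow> (nat \<Rightarrow> 'g) \<Rightarrow> real) \<Rightarrow> (real \<Rightarrow> (nat \<Rightarrow> 'g) \<Rightarrow> 'g)
    \<Rightarrow> (int \<Rightarrow> 'a \<Rightarrow> real) \<Rightarrow> 'a \<Rightarrow> ereal" where
  "tau0 p f U \<omega> = Sup (ereal ` real_of_int `
     {m. m < 0 \<and> (\<exists>l. m \<le> l \<and> l \<le> 0 \<and>
        (\<lambda>i. U (l - int i) \<omega> / aS p 1) \<in> E p f (nat (l - m + 1)) \<and>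
        (l < 0 \<longrightarrow> (\<forall>j. l + 1 \<le> j \<and> j \<le> 0 \<longrightarrow> int (Kfun p (U j \<omega>)) \<le> j - l)))})"

end

theory Submission
  imports Defs
begin

abbreviation "uni \<equiv> uniform_measure lborel {0::real..<1}"

lemma uni_emeasure: "B \<in> sets borel \<Longrightarrow> emeasure uni B = emeasure lborel ({0..<1} \<inter> B)"
  by (subst emeasure_uniform_measure) (auto simp: divide_ennreal_def)

lemma scale1:
  fixes c :: real
  assumes c: "0 < c" "c \<le> 1" and A: "A \<in> sets borel"
  shows "emeasure uni {u. u < c \<and> u / c \<in> A} = ennreal c * emeasure uni A"
proof -
  have m: "(\<lambda>u::real. inverse c * u) \<in> borel_measurable borel" by measurable
  have B: "{0..<1} \<inter> A \<in> sets borel" using A by auto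
  have set_eq: "{0..<1} \<inter> {u. u < c \<and> u / c \<in> A} = (\<lambda>u. inverse c * u) -` ({0..<1} \<inter> A)"
  proof -
    have e1: "(0 \<le> u / c) = (0 \<le> u)" for u using c by (simp add: zero_le_divide_iff)
    have e2: "(u / c < 1) = (u < c)" for u using c by (simp add: divide_less_eq)
    have e3: "inverse c * u = u / c" for u by (simp add: divide_inverse mult.commute)
    show ?thesis unfolding e3 using c(2) by (auto simp: e1 e2)
  qed
  have Ab: "{u. u < c \<and> u / c \<in> A} \<in> sets borel" using A by measurable
  have "emeasure uni {u. u < c \<and> u / c \<in> A} = emeasure lborel ((\<lambda>u. inverse c * u) -` ({0..<1} \<inter> A))"
    using uni_emeasure[OF Ab] set_eq by simp
  also have "\<dots> = emeasure lborel ((\<lambda>u. inverse c * u) -` ({0..<1} \<inter> A) \<inter> space lborel)" by simp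
  also have "\<dots> = emeasure (distr lborel borel ((*) (inverse c))) ({0..<1} \<inter> A)"
    using B by (subst emeasure_distr) auto
  also have "\<dots> = emeasure (density lborel (\<lambda>_. inverse \<bar>inverse c\<bar>)) ({0..<1} \<inter> A)"
    using c by (subst lborel_distr_mult) auto
  also have "\<dots> = ennreal c * emeasure lborel ({0..<1} \<inter> A)"
    using B c by (subst emeasure_density_const) auto
  also have "\<dots> = ennreal c * emeasure uni A" using uni_emeasure[OF A] by simp
  finally show ?thesis .
qed

lemma prob_space_uni: "prob_space uni"
  by (intro prob_space_uniform_measure) auto

lemma scale_fin:
  fixes c :: real and s :: nat
  assumes c: "0 < c" "c \<le> 1" and X: "X \<in> sets (PiM {..<s} (\<lambda>_. borel :: real measure))"
  shows "emeasure (PiM {..<s} (\<lambda>_. uni)) {y \<in> space (PiM {..<s} (\<lambda>_. uni)). (\<forall>i<s. y i < c) \<and> (\<lambda>i\<in>{..<s}. y i / c) \<in> X}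
    = ennreal (c ^ s) * emeasure (PiM {..<s} (\<lambda>_. uni)) X"
proof -
  let ?\<nu> = "PiM {..<s} (\<lambda>_. uni)"
  let ?\<nu>b = "PiM {..<s} (\<lambda>_. borel :: real measure)"
  interpret product_prob_space "\<lambda>_. uni" "{..<s}"
    by (intro product_prob_spaceI prob_space_uni)
  have sets_eq: "sets ?\<nu> = sets ?\<nu>b" by (intro sets_PiM_cong) auto
  have space_eq: "space ?\<nu> = space ?\<nu>b" by (simp add: space_PiM)
  define C where "C = {y \<in> space ?\<nu>. \<forall>i<s. y i < c}"
  define T where "T y = (\<lambda>i\<in>{..<s}. y i / c)" for y :: "nat \<Rightarrow> real"
  have Tm: "T \<in> ?\<nu>b \<rightarrow>\<^sub>M ?\<nu>b" unfolding T_def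
    by (rule measurable_PiM_single') (auto simp: space_PiM intro!: measurable_component_singleton)
  have Tm': "T \<in> ?\<nu> \<rightarrow>\<^sub>M ?\<nu>b" using Tm by (simp add: measurable_cong_sets[OF sets_eq refl])
  have Cs: "C \<in> sets ?\<nu>"
  proof -
    have "C = {y \<in> space ?\<nu>b. \<forall>i<s. y i < c}" unfolding C_def using space_eq by simp
    also have "\<dots> \<in> sets ?\<nu>b" by measurable
    finally show ?thesis using sets_eq by simp
  qed
  define P where "P = density (distr (density ?\<nu> (indicator C)) ?\<nu>b T) (\<lambda>_. ennreal (1 / c ^ s))"
  have sP: "sets P = sets ?\<nu>" using sets_eq by (simp add: P_def)
  have P_eq: "emeasure P Y = ennreal (1 / c ^ s) * emeasure ?\<nu> (C \<inter> (T -` Y \<inter> space ?\<nu>))" if Y: "Y \<in> sets ?\<nu>b" for Y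
  proof -
    have "emeasure P Y = ennreal (1 / c ^ s) * emeasure (distr (density ?\<nu> (indicator C)) ?\<nu>b T) Y"
      unfolding P_def using Y by (subst emeasure_density_const) auto
    also have "emeasure (distr (density ?\<nu> (indicator C)) ?\<nu>b T) Y = emeasure (density ?\<nu> (indicator C)) (T -` Y \<inter> space ?\<nu>)"
      using Y Tm' by (subst emeasure_distr) (auto simp: measurable_cong_sets[OF sets_density refl])
    also have "\<dots> = emeasure ?\<nu> (C \<inter> (T -` Y \<inter> space ?\<nu>))"
      using Cs measurable_sets[OF Tm' Y] by (intro emeasure_restricted) auto
    finally show ?thesis .
  qed
  have "P = ?\<nu>"
  proof (rule PiM_eqI)
    show "finite {..<s}" by simp
    show "sets P = sets ?\<nu>" by (rule sP)
    fix A assume A: "\<And>i. i \<in> {..<s} \<Longrightarrow> A i \<in> sets uni"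
    have Ab': "A i \<in> sets borel" if "i \<in> {..<s}" for i using A[OF that] by simp
    have Ab: "Pi\<^sub>E {..<s} A \<in> sets ?\<nu>b" by (rule sets_PiM_I_finite) (simp, rule Ab')
    have "C \<inter> (T -` Pi\<^sub>E {..<s} A \<inter> space ?\<nu>) = Pi\<^sub>E {..<s} (\<lambda>i. {u. u < c \<and> u / c \<in> A i})"
    proof (intro set_eqI iffI)
      fix y assume y: "y \<in> C \<inter> (T -` Pi\<^sub>E {..<s} A \<inter> space ?\<nu>)"
      then have y1: "y \<in> extensional {..<s}" "\<forall>i<s. y i < c" by (auto simp: C_def space_PiM PiE_def)
      have "T y \<in> Pi\<^sub>E {..<s} A" using y by blast
      then have y2: "\<forall>i<s. y i / c \<in> A i" unfolding T_def PiE_def Pi_def by auto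
      show "y \<in> Pi\<^sub>E {..<s} (\<lambda>i. {u. u < c \<and> u / c \<in> A i})"
        unfolding PiE_def Pi_def using y1 y2 by auto
    next
      fix y assume y: "y \<in> Pi\<^sub>E {..<s} (\<lambda>i. {u. u < c \<and> u / c \<in> A i})"
      then have y1: "y \<in> extensional {..<s}" "\<forall>i<s. y i < c \<and> y i / c \<in> A i" unfolding PiE_def Pi_def by auto
      have sp: "y \<in> space ?\<nu>" using y1 by (simp add: space_PiM PiE_def Pi_def)
      have "T y \<in> Pi\<^sub>E {..<s} A" unfolding T_def PiE_def Pi_def using y1 by auto
      then show "y \<in> C \<inter> (T -` Pi\<^sub>E {..<s} A \<inter> space ?\<nu>)" using sp y1 by (auto simp: C_def)
    qed
    then have "emeasure P (Pi\<^sub>E {..<s} A) = ennreal (1 / c ^ s) * (\<Prod>i<s. emeasure uni {u. u < c \<and> u / c \<in> A i})"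
      using P_eq[OF Ab] A by (simp add: emeasure_PiM)
    also have "(\<Prod>i<s. emeasure uni {u. u < c \<and> u / c \<in> A i}) = (\<Prod>i<s. ennreal c * emeasure uni (A i))"
      using A c by (intro prod.cong refl scale1) auto
    also have "\<dots> = ennreal (c ^ s) * (\<Prod>i<s. emeasure uni (A i))"
      using c by (simp add: prod.distrib ennreal_power)
    also have "ennreal (1 / c ^ s) * (ennreal (c ^ s) * (\<Prod>i<s. emeasure uni (A i))) = (\<Prod>i<s. emeasure uni (A i))"
      using c by (simp add: ennreal_mult[symmetric] mult.assoc[symmetric] del: ennreal_mult' ennreal_power)
    finally show "emeasure P (Pi\<^sub>E {..<s} A) = (\<Prod>i\<in>{..<s}. emeasure uni (A i))" by simp
  qed
  then have "emeasure ?\<nu> X = ennreal (1 / c ^ s) * emeasure ?\<nu> (C \<inter> (T -` X \<inter> space ?\<nu>))"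
    using P_eq[OF X] by simp
  moreover have "C \<inter> (T -` X \<inter> space ?\<nu>) = {y \<in> space ?\<nu>. (\<forall>i<s. y i < c) \<and> (\<lambda>i\<in>{..<s}. y i / c) \<in> X}"
    unfolding C_def T_def by auto
  ultimately have E: "emeasure ?\<nu> X = ennreal (1 / c ^ s) * emeasure ?\<nu> {y \<in> space ?\<nu>. (\<forall>i<s. y i < c) \<and> (\<lambda>i\<in>{..<s}. y i / c) \<in> X}"
    by simp
  have "ennreal (c ^ s) * emeasure ?\<nu> X = (ennreal (c ^ s) * ennreal (1 / c ^ s)) * emeasure ?\<nu> {y \<in> space ?\<nu>. (\<forall>i<s. y i < c) \<and> (\<lambda>i\<in>{..<s}. y i / c) \<in> X}"
    unfolding E by (simp add: mult.assoc)
  also have "ennreal (c ^ s) * ennreal (1 / c ^ s) = 1"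
    using c by (simp add: ennreal_mult[symmetric] del: ennreal_mult' ennreal_power)
  finally have F: "ennreal (c ^ s) * emeasure ?\<nu> X = 1 * emeasure ?\<nu> {y \<in> space ?\<nu>. (\<forall>i<s. y i < c) \<and> (\<lambda>i\<in>{..<s}. y i / c) \<in> X}" .
  show ?thesis using F unfolding mult_1 by (rule sym)
qed

lemma (in prob_space) indep_vars_reindex:
  assumes ind: "indep_vars M' X (h ` I)" and inj: "inj_on h I"
  shows "indep_vars (\<lambda>i. M' (h i)) (\<lambda>i. X (h i)) I"
  unfolding indep_vars_def2
proof safe
  fix i assume "i \<in> I" then show "random_variable (M' (h i)) (X (h i))"
    using ind by (auto simp: indep_vars_def2)
next
  have F: "indep_sets (\<lambda>i. {X i -` A \<inter> space M |A. A \<in> sets (M' i)}) (h ` I)"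
    using ind by (auto simp: indep_vars_def2)
  show "indep_sets (\<lambda>i. {X (h i) -` A \<inter> space M |A. A \<in> sets (M' (h i))}) I"
  proof (rule indep_setsI)
    fix i assume "i \<in> I" then show "{X (h i) -` A \<inter> space M |A. A \<in> sets (M' (h i))} \<subseteq> events"
      using F by (auto simp: indep_sets_def)
  next
    fix A J assume J: "J \<noteq> {}" "J \<subseteq> I" "finite J"
      and A: "\<forall>j\<in>J. A j \<in> {X (h j) -` A \<inter> space M |A. A \<in> sets (M' (h j))}"
    define A' where "A' = (\<lambda>k. A (the_inv_into J h k))"
    have inj': "inj_on h J" using inj J by (metis inj_on_subset)
    have A'h: "A' (h j) = A j" if "j \<in> J" for j
      using that inj' by (simp add: A'_def the_inv_into_f_f)
    have "prob (\<Inter>k\<in>h ` J. A' k) = (\<Prod>k\<in>h ` J. prob (A' k))"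
      by (rule indep_setsD[OF F]) (use J A A'h in auto)
    moreover have "(\<Inter>k\<in>h ` J. A' k) = (\<Inter>j\<in>J. A j)" using A'h by auto
    moreover have "(\<Prod>k\<in>h ` J. prob (A' k)) = (\<Prod>j\<in>J. prob (A j))"
      using A'h inj' by (simp add: prod.reindex)
    ultimately show "prob (\<Inter>j\<in>J. A j) = (\<Prod>j\<in>J. prob (A j))" by simp
  qed
qed

locale iidU = prob_space M for M :: "'a measure" +
  fixes U :: "int \<Rightarrow> 'a \<Rightarrow> real"
  assumes indepU: "indep_vars (\<lambda>_. borel) U UNIV"
  and unifU: "\<And>i. distr M borel (U i) = uniform_measure lborel {0..<1}"
begin

abbreviation "\<Omega> \<equiv> PiM (UNIV::nat set) (\<lambda>_. borel::real measure)"
abbreviation "SS \<equiv> PiM (UNIV::nat set) (\<lambda>_. uni)"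

lemma rvU[measurable]: "U i \<in> borel_measurable M"
  using indepU by (auto simp: indep_vars_def2)

lemma distr_seq:
  assumes "inj h"
  shows "distr M \<Omega> (\<lambda>\<omega> i. U (h i) \<omega>) = SS"
proof -
  have ind: "indep_vars (\<lambda>_. borel) (\<lambda>i. U (h i)) (UNIV::nat set)"
    using indep_vars_reindex[of "\<lambda>_. borel" U h UNIV] indep_vars_subset[OF indepU] assms by auto
  have "distr M (\<Pi>\<^sub>M i\<in>(UNIV::nat set). borel) (\<lambda>x. \<lambda>i\<in>UNIV. U (h i) x) = (\<Pi>\<^sub>M i\<in>UNIV. distr M borel (U (h i)))"
    using ind by (subst (asm) indep_vars_iff_distr_eq_PiM) auto
  then show ?thesis by (simp add: unifU restrict_UNIV)
qed

lemma sets_SS: "sets SS = sets \<Omega>"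
  by (intro sets_PiM_cong) auto

lemma prob_seq:
  assumes "inj h" and P: "Measurable.pred \<Omega> P"
  shows "prob {\<omega> \<in> space M. P (\<lambda>i. U (h i) \<omega>)} = measure SS {x \<in> space SS. P x}"
proof -
  have m: "(\<lambda>\<omega> i. U (h i) \<omega>) \<in> M \<rightarrow>\<^sub>M \<Omega>" by (rule measurable_PiM_single') (auto simp: space_PiM)
  have "measure SS {x \<in> space SS. P x} = measure (distr M \<Omega> (\<lambda>\<omega> i. U (h i) \<omega>)) {x \<in> space \<Omega>. P x}"
    using distr_seq[OF assms(1)] by (simp add: space_PiM)
  also have "\<dots> = prob ((\<lambda>\<omega> i. U (h i) \<omega>) -` {x \<in> space \<Omega>. P x} \<inter> space M)"
    using P m by (subst measure_distr) auto
  also have "\<dots> = prob {\<omega> \<in> space M. P (\<lambda>i. U (h i) \<omega>)}"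
    using m by (intro arg_cong[where f=prob]) (auto simp: measurable_def)
  finally show ?thesis by simp
qed

definition "sq n \<omega> = (\<lambda>i. U (- int (n + i)) \<omega>)"
definition "mu P = prob {\<omega> \<in> space M. P (sq 0 \<omega>)}"
definition shft :: "nat \<Rightarrow> (nat \<Rightarrow> real) \<Rightarrow> nat \<Rightarrow> real" where "shft n x = (\<lambda>i::nat. x (n + i))"
definition dep :: "((nat \<Rightarrow> real) \<Rightarrow> bool) \<Rightarrow> nat \<Rightarrow> bool" where "dep P n \<longleftrightarrow> (\<forall>x y. (\<forall>i<n. x i = y i) \<longrightarrow> P x = P y)"

lemma sq_meas[measurable]: "sq n \<in> M \<rightarrow>\<^sub>M \<Omega>"
  unfolding sq_def by (rule measurable_PiM_single') (auto simp: space_PiM)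

lemma shft_meas[measurable]: "shft n \<in> \<Omega> \<rightarrow>\<^sub>M \<Omega>"
  unfolding shft_def by (rule measurable_PiM_single') (auto simp: space_PiM)

lemma sq_shft: "sq n \<omega> = shft n (sq 0 \<omega>)"
  by (simp add: sq_def shft_def)

lemma inj_sqidx: "inj (\<lambda>i::nat. - int (n + i))"
  by (auto simp: inj_def)

lemma prob_sq:
  assumes P: "Measurable.pred \<Omega> P"
  shows "prob {\<omega> \<in> space M. P (sq n \<omega>)} = measure SS {x \<in> space SS. P x}"
  using prob_seq[OF inj_sqidx[of n] P] by (simp add: sq_def)

lemma mu_eq: "Measurable.pred \<Omega> P \<Longrightarrow> mu P = measure SS {x \<in> space SS. P x}"
  unfolding mu_def by (rule prob_sq)

lemma mu_shift: "Measurable.pred \<Omega> P \<Longrightarrow> prob {\<omega> \<in> space M. P (sq n \<omega>)} = mu P"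
  using prob_sq[of P n] prob_sq[of P 0] by (simp add: mu_def)

lemma indep_X: "indep_vars (\<lambda>_. borel) (\<lambda>i \<omega>. U (- int i) \<omega>) (UNIV::nat set)"
  using indep_vars_reindex[of "\<lambda>_. borel" U "\<lambda>i::nat. - int i" UNIV] indep_vars_subset[OF indepU]
  by (auto simp: inj_def)

lemma mu_indep:
  assumes P: "Measurable.pred \<Omega> P" and Q: "Measurable.pred \<Omega> Q" and d: "dep P n"
  shows "mu (\<lambda>x. P x \<and> Q (shft n x)) = mu P * mu Q"
proof -
  let ?X = "\<lambda>i \<omega>. U (- int i) \<omega>"
  define K where "K = case_bool {..<n} {n..}"
  have "indep_vars (\<lambda>j. PiM (K j) (\<lambda>_. borel)) (\<lambda>j \<omega>. restrict (\<lambda>i. ?X i \<omega>) (K j)) UNIV"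
    by (rule indep_vars_restrict[OF indep_X]) (auto simp: K_def disjoint_family_on_def split: bool.split)
  then have ind: "indep_var (PiM {..<n} (\<lambda>_. borel)) (\<lambda>\<omega>. restrict (\<lambda>i. ?X i \<omega>) {..<n})
     (PiM {n..} (\<lambda>_. borel)) (\<lambda>\<omega>. restrict (\<lambda>i. ?X i \<omega>) {n..})"
    unfolding indep_var_def
    by (rule indep_vars_cong[THEN iffD1, rotated -1]) (auto simp: K_def split: bool.split)
  define ext where "ext y = (\<lambda>i. if i < n then y i else (0::real))" for y :: "nat \<Rightarrow> real"
  have ext_m: "ext \<in> PiM {..<n} (\<lambda>_. borel) \<rightarrow>\<^sub>M \<Omega>"
    unfolding ext_def
  proof (rule measurable_PiM_single')
    fix i :: nat
    show "(\<lambda>\<omega>. if i < n then \<omega> i else 0) \<in> borel_measurable (PiM {..<n} (\<lambda>_. borel))"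
      by (cases "i < n") (auto intro: measurable_component_singleton)
  qed (auto simp: space_PiM)
  define sh where "sh y = (\<lambda>i. y (n + i))" for y :: "nat \<Rightarrow> real"
  have sh_m: "sh \<in> PiM {n..} (\<lambda>_. borel) \<rightarrow>\<^sub>M \<Omega>"
    unfolding sh_def
    by (rule measurable_PiM_single') (auto simp: space_PiM intro!: measurable_component_singleton)
  define Xa where "Xa = {y \<in> space (PiM {..<n} (\<lambda>_. borel::real measure)). P (ext y)}"
  define Xb where "Xb = {y \<in> space (PiM {n..} (\<lambda>_. borel::real measure)). Q (sh y)}"
  have Xa: "Xa \<in> sets (PiM {..<n} (\<lambda>_. borel))"
    unfolding Xa_def using measurable_compose[OF ext_m P] by (simp add: pred_def)
  have Xb: "Xb \<in> sets (PiM {n..} (\<lambda>_. borel))"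
    unfolding Xb_def using measurable_compose[OF sh_m Q] by (simp add: pred_def)
  have eqa: "P (ext (restrict (\<lambda>i. ?X i \<omega>) {..<n})) = P (sq 0 \<omega>)" for \<omega>
  proof -
    have "\<forall>i<n. ext (restrict (\<lambda>i. ?X i \<omega>) {..<n}) i = sq 0 \<omega> i"
      by (auto simp: ext_def sq_def)
    then show ?thesis using d unfolding dep_def by blast
  qed
  have eqb: "sh (restrict (\<lambda>i. ?X i \<omega>) {n..}) = sq n \<omega>" for \<omega>
    by (auto simp: sh_def sq_def)
  have "prob ((\<lambda>x. (restrict (\<lambda>i. ?X i x) {..<n}, restrict (\<lambda>i. ?X i x) {n..})) -` (Xa \<times> Xb) \<inter> space M) =
    prob ((\<lambda>x. restrict (\<lambda>i. ?X i x) {..<n}) -` Xa \<inter> space M) * prob ((\<lambda>x. restrict (\<lambda>i. ?X i x) {n..}) -` Xb \<inter> space M)"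
    by (rule indep_varD[OF ind Xa Xb])
  moreover have "(\<lambda>x. (restrict (\<lambda>i. ?X i x) {..<n}, restrict (\<lambda>i. ?X i x) {n..})) -` (Xa \<times> Xb) \<inter> space M
     = {\<omega> \<in> space M. P (sq 0 \<omega>) \<and> Q (sq n \<omega>)}"
    using eqa eqb by (auto simp: Xa_def Xb_def space_PiM measurable_space[OF rvU])
  moreover have "(\<lambda>x. restrict (\<lambda>i. ?X i x) {..<n}) -` Xa \<inter> space M = {\<omega> \<in> space M. P (sq 0 \<omega>)}"
    using eqa by (auto simp: Xa_def space_PiM measurable_space[OF rvU])
  moreover have "(\<lambda>x. restrict (\<lambda>i. ?X i x) {n..}) -` Xb \<inter> space M = {\<omega> \<in> space M. Q (sq n \<omega>)}"
    using eqb by (auto simp: Xb_def space_PiM measurable_space[OF rvU])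
  ultimately have "prob {\<omega> \<in> space M. P (sq 0 \<omega>) \<and> Q (sq n \<omega>)} = mu P * prob {\<omega> \<in> space M. Q (sq n \<omega>)}"
    by (simp add: mu_def)
  then show ?thesis using mu_shift[OF Q, of n] by (simp add: mu_def sq_shft[of n])
qed

end

lemma AN:
  fixes w x y e :: "nat \<Rightarrow> real"
  assumes w0: "\<And>k. 0 \<le> w k" and wb: "\<And>K. (\<Sum>k\<in>{c..K}. w k) \<le> \<rho>"
    and ya: "antimono y" and y0: "\<And>m. 0 \<le> y m" and y1: "\<And>m. y m \<le> 1"
    and e0: "\<And>\<delta>. \<delta> > 0 \<Longrightarrow> \<exists>M. \<forall>m\<ge>M. e m \<le> \<delta>"
    and rec: "\<And>m. x m \<le> e m + (\<Sum>k\<in>{c..m}. w k * y (m - k))"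
    and d: "\<delta> > 0"
  shows "\<exists>M. \<forall>m\<ge>M. x m \<le> \<rho> * y N + \<delta>"
proof -
  define S where "S K = (\<Sum>k\<in>{c..K}. w k)" for K
  have Smono: "S K \<le> S K'" if "K \<le> K'" for K K'
    unfolding S_def using that w0 by (intro sum_mono2) auto
  have bdd: "bdd_above (range S)" using wb unfolding S_def by (auto intro!: bdd_aboveI)
  define \<sigma> where "\<sigma> = (SUP K. S K)"
  have Sle: "S K \<le> \<sigma>" for K unfolding \<sigma>_def using bdd by (intro cSUP_upper) auto
  obtain K0 where K0: "S K0 > \<sigma> - \<delta>/2"
    using less_cSUP_iff[of UNIV S "\<sigma> - \<delta>/2"] bdd d unfolding \<sigma>_def by auto
  obtain M1 where M1: "\<forall>m\<ge>M1. e m \<le> \<delta>/2" using e0[of "\<delta>/2"] d by auto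
  show ?thesis
  proof (intro exI[of _ "max M1 (K0 + N)"] allI impI)
    fix m assume m: "max M1 (K0 + N) \<le> m"
    have "(\<Sum>k\<in>{c..m}. w k * y (m - k)) \<le> (\<Sum>k\<in>{c..m}. w k * y N + (if m - N < k then w k else 0))"
    proof (rule sum_mono)
      fix k assume k: "k \<in> {c..m}"
      show "w k * y (m - k) \<le> w k * y N + (if m - N < k then w k else 0)"
      proof (cases "m - N < k")
        case True
        have "w k * y (m - k) \<le> w k" using w0[of k] y1[of "m-k"] by (simp add: mult_left_le)
        moreover have "0 \<le> w k * y N" using w0[of k] y0[of N] by simp
        ultimately show ?thesis using True by simp
      next
        case False
        then have "m - k \<ge> N" using k m by auto
        then have "y (m - k) \<le> y N" using ya by (auto simp: antimono_def)
        then show ?thesis using False w0[of k] by (simp add: mult_left_mono)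
      qed
    qed
    also have "\<dots> = y N * S m + (\<Sum>k\<in>{c..m}. if m - N < k then w k else 0)"
      by (simp add: sum.distrib S_def sum_distrib_left mult.commute)
    also have "(\<Sum>k\<in>{c..m}. if m - N < k then w k else 0) = S m - S (m - N)"
    proof -
      have "(\<Sum>k\<in>{c..m}. if m - N < k then w k else 0) = (\<Sum>k\<in>{c..m} - {c..m-N}. w k)"
        by (rule sum.mono_neutral_cong_right) auto
      also have "\<dots> = S m - S (m - N)"
        unfolding S_def by (subst sum_diff) auto
      finally show ?thesis .
    qed
    also have "S m - S (m - N) \<le> \<delta>/2"
    proof -
      have "K0 \<le> m - N" using m by auto
      then show ?thesis using Sle[of m] Smono[of K0 "m - N"] K0 by linarith
    qed
    finally have A: "(\<Sum>k\<in>{c..m}. w k * y (m - k)) \<le> y N * S m + \<delta>/2" by simp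
    have "y N * S m \<le> y N * \<rho>" using y0[of N] wb[of m] unfolding S_def by (simp add: mult_left_mono)
    then show "x m \<le> \<rho> * y N + \<delta>" using rec[of m] A M1 m by (auto simp: mult.commute)
  qed
qed

context iidU begin

lemma ev_sets[measurable]: "Measurable.pred \<Omega> P \<Longrightarrow> {\<omega> \<in> space M. P (sq 0 \<omega>)} \<in> events"
proof -
  assume "Measurable.pred \<Omega> P"
  then have "Measurable.pred M (\<lambda>\<omega>. P (sq 0 \<omega>))" using measurable_compose[OF sq_meas[of 0]] by (simp add: pred_def)
  then show ?thesis by (rule predE)
qed

lemma mu_nonneg: "0 \<le> mu P" by (simp add: mu_def)
lemma mu_le1: "mu P \<le> 1" by (simp add: mu_def)

lemma mu_mono: "Measurable.pred \<Omega> Q \<Longrightarrow> (\<And>x. P x \<Longrightarrow> Q x) \<Longrightarrow> mu P \<le> mu Q"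
  unfolding mu_def by (intro finite_measure_mono) auto

lemma mu_True: "mu (\<lambda>_. True) = 1"
  by (simp add: mu_def prob_space)

lemma mu_compl: "Measurable.pred \<Omega> P \<Longrightarrow> mu (\<lambda>x. \<not> P x) = 1 - mu P"
proof -
  assume P: "Measurable.pred \<Omega> P"
  have "{\<omega> \<in> space M. \<not> P (sq 0 \<omega>)} = space M - {\<omega> \<in> space M. P (sq 0 \<omega>)}" by auto
  then show ?thesis unfolding mu_def using P by (simp add: prob_compl)
qed

lemma mu_sum_disj:
  assumes fin: "finite K" and P: "\<And>k. k \<in> K \<Longrightarrow> Measurable.pred \<Omega> (P k)"
    and dis: "\<And>k k' x. k \<in> K \<Longrightarrow> k' \<in> K \<Longrightarrow> k \<noteq> k' \<Longrightarrow> P k x \<Longrightarrow> P k' x \<Longrightarrow> False"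
  shows "(\<Sum>k\<in>K. mu (P k)) = mu (\<lambda>x. \<exists>k\<in>K. P k x)"
proof -
  have "prob (\<Union>k\<in>K. {\<omega> \<in> space M. P k (sq 0 \<omega>)}) = (\<Sum>k\<in>K. prob {\<omega> \<in> space M. P k (sq 0 \<omega>)})"
    using fin P dis by (intro finite_measure_finite_Union) (auto simp: disjoint_family_on_def)
  moreover have "(\<Union>k\<in>K. {\<omega> \<in> space M. P k (sq 0 \<omega>)}) = {\<omega> \<in> space M. \<exists>k\<in>K. P k (sq 0 \<omega>)}" by auto
  ultimately show ?thesis by (simp add: mu_def)
qed

lemma mu_sum_le:
  assumes fin: "finite K" and P: "\<And>k. k \<in> K \<Longrightarrow> Measurable.pred \<Omega> (P k)"
  shows "mu (\<lambda>x. \<exists>k\<in>K. P k x) \<le> (\<Sum>k\<in>K. mu (P k))"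
proof -
  have "prob (\<Union>k\<in>K. {\<omega> \<in> space M. P k (sq 0 \<omega>)}) \<le> (\<Sum>k\<in>K. prob {\<omega> \<in> space M. P k (sq 0 \<omega>)})"
    using fin P by (intro finite_measure_subadditive_finite) auto
  moreover have "(\<Union>k\<in>K. {\<omega> \<in> space M. P k (sq 0 \<omega>)}) = {\<omega> \<in> space M. \<exists>k\<in>K. P k (sq 0 \<omega>)}" by auto
  ultimately show ?thesis by (simp add: mu_def)
qed

lemma mu_lt: "0 \<le> c \<Longrightarrow> c \<le> 1 \<Longrightarrow> mu (\<lambda>x. x 0 < c) = c"
proof -
  assume c: "0 \<le> c" "c \<le> 1"
  have "mu (\<lambda>x. x 0 < c) = prob (U 0 -` {..<c} \<inter> space M)"
    unfolding mu_def sq_def by (intro arg_cong[where f=prob]) auto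
  also have "\<dots> = measure (distr M borel (U 0)) {..<c}"
    by (subst measure_distr) auto
  also have "\<dots> = measure lborel ({0..<1} \<inter> {..<c})"
    by (simp add: unifU)
  also have "{0..<1} \<inter> {..<c} = {0..<c}" using c by auto
  finally show ?thesis using c by simp
qed

end

locale renewal = iidU M U for M :: "'a measure" and U +
  fixes a :: "nat \<Rightarrow> real" and s :: nat and Bg :: "(nat \<Rightarrow> real) \<Rightarrow> bool"
  assumes amono: "mono a" and a1: "a 1 > 0" and ale1: "\<And>t. a t \<le> 1"
    and nsum: "\<not> summable (\<lambda>n. \<Prod>m = 1..Suc n. a m)"
    and Bg_meas[measurable]: "Measurable.pred \<Omega> Bg" and Bg_dep: "dep Bg s" and s1: "s \<ge> 1"
    and Bg_pos: "mu Bg > 0"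
begin

definition "Cn n x \<longleftrightarrow> (\<forall>i<n. x i < a (n - i))"

lemma Cn_meas[measurable]: "Measurable.pred \<Omega> (Cn n)"
  unfolding Cn_def by measurable

lemma Cn_0[simp]: "Cn 0 x" by (simp add: Cn_def)

lemma Cn_dep: "dep (Cn n) n" by (auto simp: dep_def Cn_def)

lemma Cn_Suc: "Cn (Suc n) x \<longleftrightarrow> x 0 < a (Suc n) \<and> Cn n (shft 1 x)"
  unfolding Cn_def shft_def
  by (auto simp: less_Suc_eq_0_disj)

lemma a_pos: "t \<ge> 1 \<Longrightarrow> a t > 0"
  using a1 monoD[OF amono, of 1 t] by linarith

lemma Cn_split: "n \<le> k \<Longrightarrow> (Cn n x \<and> Cn k x) \<longleftrightarrow> (Cn n x \<and> Cn (k - n) (shft n x))"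
  unfolding Cn_def shft_def
proof safe
  fix i assume nk: "n \<le> k" and A: "\<forall>i<n. x i < a (n - i)" "\<forall>i<k. x i < a (k - i)" and i: "i < k - n"
  then show "x (n + i) < a (k - n - i)" by (metis add.commute diff_diff_left less_diff_conv)
next
  fix i assume nk: "n \<le> k" and A: "\<forall>i<n. x i < a (n - i)" "\<forall>i<k - n. x (n + i) < a (k - n - i)" and i: "i < k"
  show "x i < a (k - i)"
  proof (cases "i < n")
    case True
    then have "a (n - i) \<le> a (k - i)" using nk amono by (intro monoD[OF amono]) auto
    then show ?thesis using A True by force
  next
    case False
    then obtain j where "i = n + j" "j < k - n" using i by (metis add_diff_inverse_nat less_diff_conv2 nk not_less add.commute)
    then show ?thesis using A by (auto simp: algebra_simps)
  qed
qed

definition "u n = mu (Cn n)"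

lemma u_eq: "u n = (\<Prod>t = 1..n. a t)"
proof (induction n)
  case 0
  have "Cn 0 = (\<lambda>_. True)" by auto
  then show ?case by (simp add: u_def mu_True)
next
  case (Suc n)
  have d: "dep (\<lambda>x. x 0 < a (Suc n)) 1" unfolding dep_def by auto
  have "u (Suc n) = mu (\<lambda>x. x 0 < a (Suc n) \<and> Cn n (shft 1 x))"
    unfolding u_def by (rule arg_cong[where f=mu]) (rule ext, rule Cn_Suc)
  also have "\<dots> = a (Suc n) * u n"
    unfolding u_def using a_pos[of "Suc n"] ale1[of "Suc n"]
    by (subst mu_indep[OF _ _ d]) (auto simp: mu_lt)
  finally show ?case using Suc by (simp add: prod.nat_ivl_Suc' mult.commute)
qed

definition "G j x \<longleftrightarrow> (\<forall>k\<in>{1..j}. \<not> Cn k x)"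
lemma G_meas[measurable]: "Measurable.pred \<Omega> (G j)" unfolding G_def by measurable
definition "g j = mu (G j)"

definition "D m n x \<longleftrightarrow> Cn n x \<and> G (m - n) (shft n x)"
lemma D_meas[measurable]: "Measurable.pred \<Omega> (D m n)" unfolding D_def by measurable

lemma Cn_shft: "n \<le> k \<Longrightarrow> Cn n x \<Longrightarrow> Cn k x \<longleftrightarrow> Cn (k - n) (shft n x)"
  using Cn_split by blast

lemma D_iff: "n \<le> m \<Longrightarrow> D m n x \<longleftrightarrow> Cn n x \<and> (\<forall>k\<in>{n<..m}. \<not> Cn k x)"
proof
  assume nm: "n \<le> m" and d: "D m n x"
  then have c: "Cn n x" by (simp add: D_def)
  show "Cn n x \<and> (\<forall>k\<in>{n<..m}. \<not> Cn k x)"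
  proof (intro conjI c ballI notI)
    fix k assume k: "k \<in> {n<..m}" "Cn k x"
    then have "Cn (k - n) (shft n x)" using Cn_shft[of n k x] c by auto
    moreover have "k - n \<in> {1..m - n}" using k by auto
    ultimately show False using d by (auto simp: D_def G_def)
  qed
next
  assume nm: "n \<le> m" and d: "Cn n x \<and> (\<forall>k\<in>{n<..m}. \<not> Cn k x)"
  show "D m n x" unfolding D_def G_def
  proof (intro conjI ballI notI)
    show "Cn n x" using d by simp
    fix j assume j: "j \<in> {1..m - n}" "Cn j (shft n x)"
    then have "Cn (n + j) x" using Cn_shft[of n "n + j" x] d by auto
    moreover have "n + j \<in> {n<..m}" using j nm by auto
    ultimately show False using d by auto
  qed
qed

lemma mu_D: "mu (D m n) = u n * g (m - n)"
  unfolding D_def u_def g_def by (rule mu_indep) (auto intro: Cn_dep)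

lemma renewal_eq: "(\<Sum>n\<le>m. u n * g (m - n)) = 1"
proof -
  have "(\<Sum>n\<le>m. mu (D m n)) = mu (\<lambda>x. \<exists>n\<in>{..m}. D m n x)"
  proof (rule mu_sum_disj)
    fix n n' x assume nn: "n \<in> {..m}" "n' \<in> {..m}" "n \<noteq> n'" "D m n x" "D m n' x"
    show False
    proof (cases "n < n'")
      case True then show False using nn D_iff[of n m x] D_iff[of n' m x] by auto
    next
      case False then have "n' < n" using nn by auto
      then show False using nn D_iff[of n m x] D_iff[of n' m x] by auto
    qed
  qed auto
  also have "(\<lambda>x. \<exists>n\<in>{..m}. D m n x) = (\<lambda>_. True)"
  proof (rule ext)
    fix x
    define n where "n = Max {n. n \<le> m \<and> Cn n x}"
    have fin: "finite {n. n \<le> m \<and> Cn n x}" by auto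
    have ne: "0 \<in> {n. n \<le> m \<and> Cn n x}" by simp
    have n: "n \<le> m" "Cn n x" using Max_in[OF fin] ne unfolding n_def by blast+
    have "\<forall>k\<in>{n<..m}. \<not> Cn k x"
      using Max_ge[OF fin] unfolding n_def by fastforce
    then have "D m n x" using D_iff[of n m x] n by auto
    then show "(\<exists>n\<in>{..m}. D m n x) = True" using n by auto
  qed
  finally show ?thesis by (simp add: mu_D mu_True)
qed

lemma g_antimono: "antimono g"
  unfolding antimono_def g_def
  by (auto intro!: mu_mono simp: G_def)

lemma g_nonneg: "0 \<le> g j" by (simp add: g_def mu_nonneg)
lemma u_nonneg: "0 \<le> u j" by (simp add: u_def mu_nonneg)

lemma g_bound: "g m * (\<Sum>n\<le>m. u n) \<le> 1"
proof -
  have "g m * (\<Sum>n\<le>m. u n) = (\<Sum>n\<le>m. u n * g m)" by (simp add: sum_distrib_left mult.commute)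
  also have "\<dots> \<le> (\<Sum>n\<le>m. u n * g (m - n))"
    using g_antimono u_nonneg by (intro sum_mono mult_left_mono) (auto simp: antimono_def)
  finally show ?thesis using renewal_eq by simp
qed

lemma u_unbounded: "\<exists>m. (\<Sum>n\<le>m. u n) > B"
proof (rule ccontr)
  assume "\<not> ?thesis"
  then have b: "(\<Sum>n\<le>m. u n) \<le> B" for m using not_less by blast
  have "summable (\<lambda>n. \<Prod>m = 1..Suc n. a m)"
  proof (rule summableI_nonneg_bounded)
    show "0 \<le> (\<Prod>m = 1..Suc n. a m)" for n using u_nonneg[of "Suc n"] by (simp add: u_eq)
    fix n
    have "(\<Sum>i<n. \<Prod>m = 1..Suc i. a m) = (\<Sum>i<n. u (Suc i))" by (simp add: u_eq)
    also have "\<dots> \<le> (\<Sum>i\<le>n. u i)"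
    proof -
      have "(\<Sum>i<n. u (Suc i)) = (\<Sum>i\<in>Suc ` {..<n}. u i)" by (simp add: sum.reindex)
      also have "\<dots> \<le> (\<Sum>i\<le>n. u i)" using u_nonneg by (intro sum_mono2) auto
      finally show ?thesis .
    qed
    also have "\<dots> \<le> B" by (rule b)
    finally show "(\<Sum>i<n. \<Prod>m = 1..Suc i. a m) \<le> B" .
  qed
  then show False using nsum by simp
qed

lemma g_lim: "\<delta> > 0 \<Longrightarrow> \<exists>M. \<forall>m\<ge>M. g m \<le> \<delta>"
proof -
  assume d: "\<delta> > 0"
  obtain M where M: "(\<Sum>n\<le>M. u n) > 1 / \<delta>" using u_unbounded by blast
  have pos: "(\<Sum>n\<le>M. u n) > 0" using M d by (smt (verit) divide_pos_pos)
  have "g M \<le> \<delta>"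
  proof -
    have "g M * (\<Sum>n\<le>M. u n) \<le> 1" by (rule g_bound)
    then have "g M \<le> 1 / (\<Sum>n\<le>M. u n)" using pos by (simp add: field_simps)
    also have "\<dots> \<le> \<delta>" using M d pos by (simp add: field_simps)
    finally show ?thesis .
  qed
  then show ?thesis using g_antimono by (auto simp: antimono_def intro: order_trans)
qed

definition "h m = mu (\<lambda>x. \<forall>k\<in>{s..m}. \<not> Cn k x)"

lemma h_bound: "s \<le> m \<Longrightarrow> h m \<le> real s * g (m - s)"
proof -
  assume sm: "s \<le> m"
  have "h m \<le> mu (\<lambda>x. \<exists>n\<in>{..<s}. D m n x)"
    unfolding h_def
  proof (rule mu_mono)
    fix x assume A: "\<forall>k\<in>{s..m}. \<not> Cn k x"
    define n where "n = Max {n. n \<le> m \<and> Cn n x}"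
    have fin: "finite {n. n \<le> m \<and> Cn n x}" by auto
    have ne: "0 \<in> {n. n \<le> m \<and> Cn n x}" by simp
    have n: "n \<le> m" "Cn n x" using Max_in[OF fin] ne unfolding n_def by blast+
    have "\<forall>k\<in>{n<..m}. \<not> Cn k x"
      using Max_ge[OF fin] unfolding n_def by fastforce
    then have "D m n x" using D_iff[of n m x] n by auto
    moreover have "n < s" using A n by (meson atLeastAtMost_iff not_le)
    ultimately show "\<exists>n\<in>{..<s}. D m n x" by auto
  qed auto
  also have "\<dots> \<le> (\<Sum>n<s. mu (D m n))" by (rule mu_sum_le) auto
  also have "\<dots> \<le> (\<Sum>n<s. g (m - s))"
  proof (rule sum_mono)
    fix n assume "n \<in> {..<s}"
    then have "g (m - n) \<le> g (m - s)" using g_antimono by (auto simp: antimono_def)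
    moreover have "u n \<le> 1" by (simp add: u_def mu_le1)
    show "mu (D m n) \<le> g (m - s)"
    proof -
      have "u n * g (m - n) \<le> 1 * g (m - n)" using \<open>u n \<le> 1\<close> g_nonneg by (intro mult_right_mono) auto
      then show ?thesis using \<open>g (m - n) \<le> g (m - s)\<close> by (simp add: mu_D)
    qed
  qed
  finally show ?thesis by simp
qed

lemma h_lim: "\<delta> > 0 \<Longrightarrow> \<exists>M. \<forall>m\<ge>M. h m \<le> \<delta>"
proof -
  assume d: "\<delta> > 0"
  obtain M where M: "\<forall>m\<ge>M. g m \<le> \<delta> / real s" using g_lim[of "\<delta> / real s"] d s1 by auto
  show ?thesis
  proof (intro exI[of _ "M + s"] allI impI)
    fix m assume m: "M + s \<le> m"
    then have "h m \<le> real s * g (m - s)" by (intro h_bound) auto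
    also have "\<dots> \<le> real s * (\<delta> / real s)" using M m by (intro mult_left_mono) auto
    finally show "h m \<le> \<delta>" using s1 by simp
  qed
qed

lemma shft_0[simp]: "shft 0 x = x" by (simp add: shft_def)
lemma shft_shft[simp]: "shft j (shft k x) = shft (k + j) x" by (simp add: shft_def add.assoc)

lemma dep_mono: "dep P n \<Longrightarrow> n \<le> k \<Longrightarrow> dep P k"
  unfolding dep_def by auto

lemma mu_or_le: "Measurable.pred \<Omega> P \<Longrightarrow> Measurable.pred \<Omega> Q \<Longrightarrow> mu (\<lambda>x. P x \<or> Q x) \<le> mu P + mu Q"
proof -
  assume P: "Measurable.pred \<Omega> P" and Q: "Measurable.pred \<Omega> Q"
  have "{\<omega> \<in> space M. P (sq 0 \<omega>) \<or> Q (sq 0 \<omega>)} = {\<omega> \<in> space M. P (sq 0 \<omega>)} \<union> {\<omega> \<in> space M. Q (sq 0 \<omega>)}" by auto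
  then show ?thesis unfolding mu_def using P Q by (simp add: measure_Un_le)
qed

definition "fail m x \<longleftrightarrow> (\<forall>k\<in>{..m}. \<not> (Cn k x \<and> Bg (shft k x)))"
lemma fail_meas[measurable]: "Measurable.pred \<Omega> (fail m)" unfolding fail_def by measurable

definition "T c k x \<longleftrightarrow> Cn k x \<and> (\<forall>j\<in>{c..<k}. \<not> Cn j x)"
lemma T_meas[measurable]: "Measurable.pred \<Omega> (T c k)" unfolding T_def by measurable
lemma T_dep: "dep (T c k) k" unfolding dep_def T_def Cn_def by auto

lemma T_disj: "T c k x \<Longrightarrow> T c k' x \<Longrightarrow> c \<le> k \<Longrightarrow> c \<le> k' \<Longrightarrow> k = k'"
proof (rule ccontr)
  assume A: "T c k x" "T c k' x" "c \<le> k" "c \<le> k'" "k \<noteq> k'"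
  show False
  proof (cases "k < k'")
    case True then show False using A unfolding T_def by auto
  next
    case False then have "k' < k" using A by auto
    then show False using A unfolding T_def by auto
  qed
qed

lemma decomp:
  assumes A: "\<forall>k\<in>{c..m}. \<not> (Cn k x \<and> Bg (shft k x))"
  shows "(\<forall>k\<in>{c..m}. \<not> Cn k x) \<or> (\<exists>k\<in>{c..m}. T c k x \<and> fail (m - k) (shft k x))"
proof (cases "\<exists>k\<in>{c..m}. Cn k x")
  case True
  define k where "k = (LEAST k. k \<in> {c..m} \<and> Cn k x)"
  have ex: "\<exists>k. k \<in> {c..m} \<and> Cn k x" using True by auto
  have "k \<in> {c..m} \<and> Cn k x" unfolding k_def by (rule LeastI_ex[OF ex])
  then have k: "k \<in> {c..m}" "Cn k x" by auto
  have Tk: "T c k x" unfolding T_def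
  proof (intro conjI k ballI notI)
    fix j assume j: "j \<in> {c..<k}" "Cn j x"
    have "j \<le> m" using j k by auto
    then have "k \<le> j" unfolding k_def using j by (intro Least_le) auto
    then show False using j by auto
  qed
  have "fail (m - k) (shft k x)" unfolding fail_def
  proof (intro ballI notI)
    fix j assume j: "j \<in> {..m - k}" "Cn j (shft k x) \<and> Bg (shft j (shft k x))"
    then have "Cn (k + j) x" using Cn_shft[of k "k + j" x] k by auto
    moreover have "k + j \<in> {c..m}" using j k by auto
    ultimately show False using A j by auto
  qed
  then show ?thesis using Tk k by auto
qed auto

definition "q m = mu (fail m)"
definition "r k = mu (\<lambda>x. \<not> Bg x \<and> T s k x)"

lemma q_antimono: "antimono q"
  unfolding antimono_def q_def by (auto intro!: mu_mono simp: fail_def)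

lemma q_rec: "q m \<le> h m + (\<Sum>k\<in>{s..m}. r k * q (m - k))"
proof -
  have "q m \<le> mu (\<lambda>x. (\<forall>k\<in>{s..m}. \<not> Cn k x) \<or> (\<exists>k\<in>{s..m}. (\<not> Bg x \<and> T s k x) \<and> fail (m - k) (shft k x)))"
    unfolding q_def
  proof (rule mu_mono)
    fix x assume f: "fail m x"
    then have nb: "\<not> Bg x" unfolding fail_def by (metis Cn_0 atMost_iff le0 shft_0)
    have "\<forall>k\<in>{s..m}. \<not> (Cn k x \<and> Bg (shft k x))" using f unfolding fail_def by auto
    from decomp[OF this] nb show "(\<forall>k\<in>{s..m}. \<not> Cn k x) \<or> (\<exists>k\<in>{s..m}. (\<not> Bg x \<and> T s k x) \<and> fail (m - k) (shft k x))"
      by auto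
  qed measurable
  also have "\<dots> \<le> h m + mu (\<lambda>x. \<exists>k\<in>{s..m}. (\<not> Bg x \<and> T s k x) \<and> fail (m - k) (shft k x))"
    unfolding h_def by (rule mu_or_le) measurable
  also have "mu (\<lambda>x. \<exists>k\<in>{s..m}. (\<not> Bg x \<and> T s k x) \<and> fail (m - k) (shft k x))
      \<le> (\<Sum>k\<in>{s..m}. mu (\<lambda>x. (\<not> Bg x \<and> T s k x) \<and> fail (m - k) (shft k x)))"
    by (rule mu_sum_le) auto
  also have "\<dots> = (\<Sum>k\<in>{s..m}. r k * q (m - k))"
  proof (rule sum.cong[OF refl])
    fix k assume k: "k \<in> {s..m}"
    have "dep (\<lambda>x. \<not> Bg x \<and> T s k x) k"
      using dep_mono[OF Bg_dep, of k] T_dep[of s k] k unfolding dep_def by auto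
    then show "mu (\<lambda>x. (\<not> Bg x \<and> T s k x) \<and> fail (m - k) (shft k x)) = r k * q (m - k)"
      unfolding r_def q_def by (rule mu_indep[rotated 2]) measurable
  qed
  finally show ?thesis by simp
qed

lemma r_sum: "(\<Sum>k\<in>{s..K}. r k) \<le> 1 - mu Bg"
proof -
  have "(\<Sum>k\<in>{s..K}. r k) = mu (\<lambda>x. \<exists>k\<in>{s..K}. \<not> Bg x \<and> T s k x)"
    unfolding r_def
  proof (rule mu_sum_disj)
    fix k k' x assume "k \<in> {s..K}" "k' \<in> {s..K}" "k \<noteq> k'" "\<not> Bg x \<and> T s k x" "\<not> Bg x \<and> T s k' x"
    then show False using T_disj[of s k x k'] by auto
  qed auto
  also have "\<dots> \<le> mu (\<lambda>x. \<not> Bg x)" by (rule mu_mono) auto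
  also have "\<dots> = 1 - mu Bg" by (rule mu_compl) measurable
  finally show ?thesis .
qed

lemma q_lim: "\<epsilon> > 0 \<Longrightarrow> \<exists>N. q N \<le> \<epsilon>"
proof -
  assume e: "\<epsilon> > 0"
  define \<rho> where "\<rho> = 1 - mu Bg"
  have \<rho>: "\<rho> < 1" "0 \<le> \<rho>" using Bg_pos mu_le1[of Bg] unfolding \<rho>_def by auto
  have q0: "0 \<le> q m" "q m \<le> 1" for m by (auto simp: q_def mu_nonneg mu_le1)
  have bdd: "bdd_below (range q)" using q0 by (auto intro!: bdd_belowI)
  define L where "L = (INF m. q m)"
  have Lle: "L \<le> q m" for m unfolding L_def using bdd by (intro cINF_lower) auto
  have L0: "0 \<le> L" unfolding L_def using q0 by (intro cINF_greatest) auto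
  have key: "L \<le> \<rho> * L + 2 * \<delta>" if d: "\<delta> > 0" for \<delta>
  proof -
    obtain N where N: "q N < L + \<delta>"
      using cINF_less_iff[of UNIV q "L + \<delta>"] bdd d unfolding L_def by auto
    have w0: "\<And>k. 0 \<le> r k" by (simp add: r_def mu_nonneg)
    have wb: "\<And>K. (\<Sum>k\<in>{s..K}. r k) \<le> \<rho>" using r_sum unfolding \<rho>_def by simp
    obtain M where M: "\<forall>m\<ge>M. q m \<le> \<rho> * q N + \<delta>"
      using AN[OF w0 wb q_antimono q0(1) q0(2) h_lim q_rec d, of N] by blast
    have "L \<le> \<rho> * q N + \<delta>" using M Lle[of M] by auto
    also have "\<rho> * q N \<le> \<rho> * (L + \<delta>)" using N \<rho> by (intro mult_left_mono) auto
    also have "\<rho> * (L + \<delta>) \<le> \<rho> * L + \<delta>" using \<rho> d by (simp add: distrib_left)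
    finally show ?thesis by simp
  qed
  have "L \<le> \<rho> * L"
  proof (rule field_le_epsilon)
    fix \<delta> :: real assume "\<delta> > 0" then show "L \<le> \<rho> * L + \<delta>" using key[of "\<delta>/2"] by simp
  qed
  have "L = 0"
  proof (rule ccontr)
    assume "L \<noteq> 0" then have "L > 0" using L0 by simp
    then have "\<rho> * L < 1 * L" using \<rho> by (intro mult_strict_right_mono) auto
    then show False using \<open>L \<le> \<rho> * L\<close> by simp
  qed
  then obtain N where N: "q N < \<epsilon>" using cINF_less_iff[of UNIV q \<epsilon>] bdd e unfolding L_def by auto
  show ?thesis by (rule exI[of _ N]) (use N in linarith)
qed

definition "fail1 m x \<longleftrightarrow> (\<forall>k\<in>{1..m}. \<not> (Cn k x \<and> Bg (shft k x)))"
lemma fail1_meas[measurable]: "Measurable.pred \<Omega> (fail1 m)" unfolding fail1_def by measurable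

lemma fail1_rec: "mu (fail1 m) \<le> g m + (\<Sum>k\<in>{1..m}. mu (T 1 k) * q (m - k))"
proof -
  have "mu (fail1 m) \<le> mu (\<lambda>x. G m x \<or> (\<exists>k\<in>{1..m}. T 1 k x \<and> fail (m - k) (shft k x)))"
  proof (rule mu_mono)
    fix x assume f: "fail1 m x"
    from decomp[of 1 m x] f show "G m x \<or> (\<exists>k\<in>{1..m}. T 1 k x \<and> fail (m - k) (shft k x))"
      unfolding fail1_def G_def by auto
  qed measurable
  also have "\<dots> \<le> g m + mu (\<lambda>x. \<exists>k\<in>{1..m}. T 1 k x \<and> fail (m - k) (shft k x))"
    unfolding g_def by (rule mu_or_le) measurable
  also have "mu (\<lambda>x. \<exists>k\<in>{1..m}. T 1 k x \<and> fail (m - k) (shft k x))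
      \<le> (\<Sum>k\<in>{1..m}. mu (\<lambda>x. T 1 k x \<and> fail (m - k) (shft k x)))"
    by (rule mu_sum_le) auto
  also have "\<dots> = (\<Sum>k\<in>{1..m}. mu (T 1 k) * q (m - k))"
    unfolding q_def by (intro sum.cong refl mu_indep T_dep) measurable
  finally show ?thesis by simp
qed

lemma T1_sum: "(\<Sum>k\<in>{1..K}. mu (T 1 k)) \<le> 1"
proof -
  have "(\<Sum>k\<in>{1..K}. mu (T 1 k)) = mu (\<lambda>x. \<exists>k\<in>{1..K}. T 1 k x)"
  proof (rule mu_sum_disj)
    fix k k' x assume "k \<in> {1..K}" "k' \<in> {1..K}" "k \<noteq> k'" "T 1 k x" "T 1 k' x"
    then show False using T_disj[of 1 k x k'] by auto
  qed auto
  then show ?thesis using mu_le1 by simp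
qed

lemma main_renewal: "mu (\<lambda>x. \<forall>k. k \<ge> 1 \<longrightarrow> \<not> (Cn k x \<and> Bg (shft k x))) = 0"
proof -
  have q0: "0 \<le> q m" "q m \<le> 1" for m by (auto simp: q_def mu_nonneg mu_le1)
  have le: "mu (\<lambda>x. \<forall>k. k \<ge> 1 \<longrightarrow> \<not> (Cn k x \<and> Bg (shft k x))) \<le> mu (fail1 m)" for m
    by (rule mu_mono[OF fail1_meas]) (auto simp: fail1_def)
  have E: "mu (\<lambda>x. \<forall>k. k \<ge> 1 \<longrightarrow> \<not> (Cn k x \<and> Bg (shft k x))) \<le> 0 + \<epsilon>" if e: "\<epsilon> > 0" for \<epsilon>
  proof -
    obtain N where N: "q N \<le> \<epsilon>/2" using q_lim[of "\<epsilon>/2"] e by auto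
    have w0: "\<And>k. 0 \<le> mu (T 1 k)" by (simp add: mu_nonneg)
    have e2: "\<epsilon>/2 > 0" using e by simp
    have "\<exists>M. \<forall>m\<ge>M. mu (fail1 m) \<le> 1 * q N + \<epsilon>/2"
      by (rule AN[OF w0 T1_sum q_antimono q0(1) q0(2) g_lim fail1_rec e2])
    then obtain M where "mu (fail1 M) \<le> q N + \<epsilon>/2" by auto
    then show ?thesis using le[of M] N by simp
  qed
  show ?thesis
  proof (rule ccontr)
    assume ne: "mu (\<lambda>x. \<forall>k. k \<ge> 1 \<longrightarrow> \<not> (Cn k x \<and> Bg (shft k x))) \<noteq> 0"
    then have pos: "mu (\<lambda>x. \<forall>k. k \<ge> 1 \<longrightarrow> \<not> (Cn k x \<and> Bg (shft k x))) > 0"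
      using mu_nonneg[of "\<lambda>x. \<forall>k. k \<ge> 1 \<longrightarrow> \<not> (Cn k x \<and> Bg (shft k x))"] by linarith
    from E[OF half_gt_zero[OF pos]] pos show False by linarith
  qed
qed

end

lemma interval_null_sub:
  fixes S :: "real set"
  assumes iv: "is_interval S" and bd: "S \<subseteq> {l..<r}" and m0: "measure lborel S = 0"
    and x: "x \<in> S" and y: "y \<in> S"
  shows "x = y"
proof (rule ccontr)
  assume "x \<noteq> y"
  then consider "x < y" | "y < x" by linarith
  then obtain c d where cd: "c < d" "{c..d} \<subseteq> S"
  proof cases
    case 1
    have "{x..y} \<subseteq> S"
    proof
      fix t assume "t \<in> {x..y}"
      then show "t \<in> S" using iv x y unfolding is_interval_1 atLeastAtMost_iff by blast
    qed
    then show ?thesis using 1 that[of x y] by blast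
  next
    case 2
    have "{y..x} \<subseteq> S"
    proof
      fix t assume "t \<in> {y..x}"
      then show "t \<in> S" using iv x y unfolding is_interval_1 atLeastAtMost_iff by blast
    qed
    then show ?thesis using 2 that[of y x] by blast
  qed
  have Sb: "S \<in> sets lborel" using real_interval_borel_measurable[OF iv] by simp
  have lr: "l \<le> r" using bd x by auto
  have "emeasure lborel S \<le> emeasure lborel {l..<r}" using bd Sb by (intro emeasure_mono) auto
  also have "\<dots> = ennreal (r - l)" using lr by simp
  finally have fin: "emeasure lborel S < top" by (rule le_less_trans[OF _ ennreal_less_top])
  have "measure lborel {c..d} \<le> measure lborel S"
    using cd Sb fin by (intro measure_mono_fmeasurable) (auto simp: fmeasurable_def)
  then show False using cd m0 by simp
qed

locale coup =
  fixes p :: "'g::countable \<Rightarrow> (nat \<Rightarrow> 'g) \<Rightarrow> real" and f :: "real \<Rightarrow> (nat \<Rightarrow> 'g) \<Rightarrow> 'g"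
  assumes p_nonneg: "\<And>g w. 0 \<le> p g w"
    and f_max: "max_coupling p f"
    and a1_pos: "aS p 1 > 0"
    and a_mono: "mono (aS p)"
    and a_lim: "aS p \<longlonglongrightarrow> 1"
begin

abbreviation "a1 \<equiv> aS p 1"

definition "Bs = (SOME B :: nat \<Rightarrow> 'g \<Rightarrow> (nat \<Rightarrow> 'g) \<Rightarrow> real set.
      (\<forall>k g w w'. w \<in> admissible p \<longrightarrow> w' \<in> admissible p \<longrightarrow> (\<forall>i<k. w i = w' i)
          \<longrightarrow> B k g w = B k g w') \<and>
      (\<forall>k g w. w \<in> admissible p \<longrightarrow>
          is_interval (B k g w) \<and> measure lborel (B k g w) = bK p k g w) \<and>
      (\<forall>k w. w \<in> admissible p \<longrightarrow>
          disjoint_family (\<lambda>g. B k g w) \<and> (\<Union>g. B k g w) = {aPrev p k w ..< aW p k w}) \<and>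
      (\<forall>w \<in> admissible p. \<forall>u \<in> {0..<1}. \<forall>k g. u \<in> B k g w \<longrightarrow> f u w = g))"

lemma Bs_all: "(\<forall>k g w w'. w \<in> admissible p \<longrightarrow> w' \<in> admissible p \<longrightarrow> (\<forall>i<k. w i = w' i)
          \<longrightarrow> Bs k g w = Bs k g w') \<and>
      (\<forall>k g w. w \<in> admissible p \<longrightarrow>
          is_interval (Bs k g w) \<and> measure lborel (Bs k g w) = bK p k g w) \<and>
      (\<forall>k w. w \<in> admissible p \<longrightarrow>
          disjoint_family (\<lambda>g. Bs k g w) \<and> (\<Union>g. Bs k g w) = {aPrev p k w ..< aW p k w}) \<and>
      (\<forall>w \<in> admissible p. \<forall>u \<in> {0..<1}. \<forall>k g. u \<in> Bs k g w \<longrightarrow> f u w = g)"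
  unfolding Bs_def by (rule someI_ex[OF f_max[unfolded max_coupling_def]])

lemma Bs_props1: "w \<in> admissible p \<Longrightarrow> is_interval (Bs k g w) \<and> measure lborel (Bs k g w) = bK p k g w"
  using conjunct1[OF conjunct2[OF Bs_all]] by simp
lemma Bs_props2: "w \<in> admissible p \<Longrightarrow> (\<Union>g. Bs k g w) = {aPrev p k w ..< aW p k w}"
  using conjunct1[OF conjunct2[OF conjunct2[OF Bs_all]]] by simp
lemma Bs_props3: "w \<in> admissible p \<Longrightarrow> u \<in> {0..<1} \<Longrightarrow> u \<in> Bs k g w \<Longrightarrow> f u w = g"
  using conjunct2[OF conjunct2[OF conjunct2[OF Bs_all]]] by simp

lemmas Bs_props = Bs_props1 Bs_props2 Bs_props3

lemma a_le1: "aS p t \<le> 1"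
  using a_mono a_lim by (intro incseq_le) (auto simp: mono_def incseq_def)

lemma aK_nonneg: "z \<in> admissible p \<Longrightarrow> 0 \<le> aK p k g z"
  unfolding aK_def by (rule cINF_greatest) (auto simp: p_nonneg)

lemma aK_le_p: "z \<in> admissible p \<Longrightarrow> aK p k g z \<le> p g z"
  unfolding aK_def by (rule cINF_lower) (auto intro!: bdd_belowI[of _ 0] simp: p_nonneg)

lemma aW_nonneg: "z \<in> admissible p \<Longrightarrow> 0 \<le> aW p k z"
  unfolding aW_def by (rule infsum_nonneg) (simp add: aK_nonneg)

lemma aS_le_aW: "z \<in> admissible p \<Longrightarrow> aS p k \<le> aW p k z"
  unfolding aS_def by (rule cINF_lower) (auto intro!: bdd_belowI[of _ 0] simp: aW_nonneg)

definition "zz g = (SOME z. z \<in> admissible p \<and> z 0 = g)"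

lemma zz: "g \<in> G0 p \<Longrightarrow> zz g \<in> admissible p \<and> zz g 0 = g"
proof -
  assume "g \<in> G0 p"
  then obtain z where "z \<in> admissible p" "z 0 = g" unfolding G0_def by blast
  then have "z \<in> admissible p \<and> z 0 = g" by blast
  then show ?thesis unfolding zz_def by (rule someI[where P="\<lambda>z. z \<in> admissible p \<and> z 0 = g"])
qed

lemma ftil_eq: "ftil p f u g = f (a1 * u) (zz g)"
  by (simp add: ftil_def zz_def)

definition "Dset = (\<Union>g. \<Union>k. \<Union>h.
   (if g \<in> G0 p \<and> measure lborel (Bs k h (zz g)) = 0 then Bs k h (zz g) else {}))"

lemma Dset_countable: "countable Dset"
  unfolding Dset_def
proof (intro countable_UN[OF countableI_type])
  fix g k h
  show "countable (if g \<in> G0 p \<and> measure lborel (Bs k h (zz g)) = 0 then Bs k h (zz g) else {})"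
  proof (cases "g \<in> G0 p \<and> measure lborel (Bs k h (zz g)) = 0")
    case True
    then have z: "zz g \<in> admissible p" using zz by auto
    have iv: "is_interval (Bs k h (zz g))" using Bs_props(1)[OF z] by auto
    have bd: "Bs k h (zz g) \<subseteq> {aPrev p k (zz g) ..< aW p k (zz g)}" using Bs_props(2)[OF z, of k] by auto
    have "Bs k h (zz g) = {} \<or> (\<exists>x. Bs k h (zz g) \<subseteq> {x})"
      using interval_null_sub[OF iv bd] True by blast
    then have fin: "finite (Bs k h (zz g))"
    proof
      assume "\<exists>x. Bs k h (zz g) \<subseteq> {x}"
      then obtain x where "Bs k h (zz g) \<subseteq> {x}" by blast
      then show ?thesis by (rule finite_subset) simp
    qed simp
    have "countable (Bs k h (zz g))" using fin by (rule countable_finite)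
    then show ?thesis using True by simp
  next
    case False then show ?thesis by (simp only: if_False countable_empty)
  qed
qed

definition "Good u \<longleftrightarrow> 0 \<le> u \<and> u < 1 \<and> a1 * u \<notin> Dset"

lemma hist_adm:
  assumes z: "z \<in> admissible p" and pos: "p g z > 0"
  shows "(\<lambda>i. if i = 0 then g else z (i - 1)) \<in> admissible p"
  unfolding admissible_def
proof (intro CollectI allI)
  fix n
  show "\<not> forbidden p (map (\<lambda>i. if i = 0 then g else z (i - 1)) [0..<n])"
  proof (cases n)
    case 0 then show ?thesis by simp
  next
    case (Suc n')
    have eq: "map (\<lambda>i. if i = 0 then g else z (i - 1)) [0..<Suc n'] = g # map z [0..<n']"
      by (simp add: upt_conv_Cons map_Suc_upt[symmetric] del: upt_Suc)
    have nf: "\<not> forbidden p (map z [0..<n'])" using z by (auto simp: admissible_def)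
    have "\<exists>w. (\<forall>i<length (map z [0..<n']). w i = map z [0..<n'] ! i) \<and> p g w \<noteq> 0"
      using pos by (intro exI[of _ z]) auto
    then show ?thesis using Suc eq nf by auto
  qed
qed

lemma step:
  assumes g: "g \<in> G0 p" and u: "Good u"
  shows "ftil p f u g \<in> G0 p \<and> (\<exists>k. a1 * u \<in> Bs k (ftil p f u g) (zz g))"
proof -
  define z where "z = zz g"
  have z: "z \<in> admissible p" "z 0 = g" using zz[OF g] by (auto simp: z_def)
  define y where "y = a1 * u"
  have y: "0 \<le> y" "y < 1" "y \<notin> Dset"
  proof -
    show "0 \<le> y" using u a1_pos by (auto simp: y_def Good_def)
    have "a1 * u \<le> 1 * u" using a_le1 u by (intro mult_right_mono) (auto simp: Good_def)
    then show "y < 1" using u by (auto simp: y_def Good_def)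
    show "y \<notin> Dset" using u by (auto simp: y_def Good_def)
  qed
  have "eventually (\<lambda>k. aS p k > y) sequentially"
    using a_lim y(2) by (rule order_tendstoD)
  then obtain k where k: "aS p k > y" by (auto simp: eventually_sequentially)
  then have ex: "\<exists>j. aW p j z > y" using aS_le_aW[OF z(1), of k] by (intro exI[of _ k]) auto
  define j where "j = (LEAST j. aW p j z > y)"
  have j: "aW p j z > y" unfolding j_def by (rule LeastI_ex[OF ex])
  have jp: "aPrev p j z \<le> y"
  proof (cases j)
    case 0 then show ?thesis using y by (simp add: aPrev_def)
  next
    case (Suc j')
    then have "\<not> aW p j' z > y" unfolding j_def using not_less_Least by (metis lessI)
    then show ?thesis using Suc by (simp add: aPrev_def)
  qed
  have "y \<in> (\<Union>h. Bs j h z)" using Bs_props(2)[OF z(1), of j] j jp by auto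
  then obtain h where h: "y \<in> Bs j h z" by auto
  have fy: "f y z = h" using Bs_props(3)[OF z(1) _ h] y by auto
  have ft: "ftil p f u g = h" using fy by (simp add: ftil_eq y_def z_def)
  have "measure lborel (Bs j h z) \<noteq> 0"
  proof
    assume "measure lborel (Bs j h z) = 0"
    then have "y \<in> Dset" unfolding Dset_def using g h z_def by auto
    then show False using y by simp
  qed
  then have "bK p j h z \<noteq> 0" using Bs_props(1)[OF z(1), of j h] by simp
  moreover have "bK p j h z \<ge> 0" using Bs_props(1)[OF z(1), of j h] by (metis measure_nonneg)
  ultimately have "bK p j h z > 0" by simp
  then have "aK p j h z > 0" using aK_nonneg[OF z(1)] unfolding bK_def
    by (smt (verit))
  then have "p h z > 0" using aK_le_p[OF z(1)] by (smt (verit))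
  then have "(\<lambda>i. if i = 0 then h else z (i - 1)) \<in> admissible p" by (rule hist_adm[OF z(1)])
  then have "h \<in> G0 p" unfolding G0_def by (intro CollectI bexI[of _ "(\<lambda>i. if i = 0 then h else z (i - 1))"]) auto
  moreover have "a1 * u \<in> Bs j h (zz g)" using h by (simp add: y_def z_def)
  ultimately show ?thesis unfolding ft by blast
qed

lemma ftil_char:
  assumes g: "g \<in> G0 p" and u: "Good u"
  shows "ftil p f u g = h \<longleftrightarrow> a1 * u \<in> (\<Union>k. Bs k h (zz g))"
proof
  assume "ftil p f u g = h" then show "a1 * u \<in> (\<Union>k. Bs k h (zz g))" using step[OF g u] by auto
next
  assume "a1 * u \<in> (\<Union>k. Bs k h (zz g))"
  then obtain k where k: "a1 * u \<in> Bs k h (zz g)" by auto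
  have "0 \<le> a1 * u" "a1 * u < 1"
  proof -
    show "0 \<le> a1 * u" using u a1_pos by (auto simp: Good_def)
    have "a1 * u \<le> 1 * u" using a_le1 u by (intro mult_right_mono) (auto simp: Good_def)
    then show "a1 * u < 1" using u by (auto simp: Good_def)
  qed
  then have "f (a1 * u) (zz g) = h" using Bs_props(3)[OF conjunct1[OF zz[OF g]] _ k] by auto
  then show "ftil p f u g = h" by (simp add: ftil_eq)
qed

lemma fiter_G0: "g \<in> G0 p \<Longrightarrow> (\<forall>i<n. Good (v i)) \<Longrightarrow> fiter p f n v g \<in> G0 p"
proof (induction n arbitrary: v)
  case 0 then show ?case by simp
next
  case (Suc n)
  have "fiter p f n (\<lambda>i. v (Suc i)) g \<in> G0 p" using Suc by auto
  then show ?case using step[of _ "v 0"] Suc.prems by simp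
qed

lemma fiter_dep: "(\<forall>i<n. v i = v' i) \<Longrightarrow> fiter p f n v g = fiter p f n v' g"
proof (induction n arbitrary: v v')
  case 0 then show ?case by simp
next
  case (Suc n)
  have "fiter p f n (\<lambda>i. v (Suc i)) g = fiter p f n (\<lambda>i. v' (Suc i)) g"
    using Suc.prems by (intro Suc.IH) auto
  moreover have "v 0 = v' 0" using Suc.prems by auto
  ultimately show ?case by simp
qed

end

context coup begin

abbreviation "\<Omega>' \<equiv> PiM (UNIV::nat set) (\<lambda>_. borel::real measure)"

lemma Dset_borel[measurable]: "Dset \<in> sets borel"
  using countable_imp_null_set_lborel[OF Dset_countable] by (simp add: null_sets_def)

lemma Good_meas[measurable]: "Measurable.pred borel Good"
  unfolding Good_def by measurable

definition "SSet g h = (\<Union>k. Bs k h (zz g))"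

lemma SSet_borel: "g \<in> G0 p \<Longrightarrow> SSet g h \<in> sets borel"
  unfolding SSet_def
  using Bs_props1[OF conjunct1[OF zz]] real_interval_borel_measurable by (intro sets.countable_UN) auto

definition "Pg n g h x \<longleftrightarrow> (\<forall>i<n. Good (x i)) \<and> fiter p f n x g = h"

lemma Pg_Suc: "g \<in> G0 p \<Longrightarrow> Pg (Suc n) g h x \<longleftrightarrow>
   Good (x 0) \<and> (\<exists>g''. g'' \<in> G0 p \<and> Pg n g g'' (\<lambda>i. x (Suc i)) \<and> a1 * x 0 \<in> SSet g'' h)"
proof
  assume g: "g \<in> G0 p" and P: "Pg (Suc n) g h x"
  have G: "\<forall>i<Suc n. Good (x i)" using P by (simp add: Pg_def)
  then have G0x: "Good (x 0)" and Gs: "\<forall>i<n. Good (x (Suc i))" by auto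
  define g'' where "g'' = fiter p f n (\<lambda>i. x (Suc i)) g"
  have g'': "g'' \<in> G0 p" unfolding g''_def using fiter_G0[OF g Gs] .
  have "ftil p f (x 0) g'' = h" using P by (simp add: Pg_def g''_def)
  then have "a1 * x 0 \<in> SSet g'' h" using ftil_char[OF g'' G0x] by (simp add: SSet_def)
  moreover have "Pg n g g'' (\<lambda>i. x (Suc i))" using Gs by (simp add: Pg_def g''_def)
  ultimately show "Good (x 0) \<and> (\<exists>g''. g'' \<in> G0 p \<and> Pg n g g'' (\<lambda>i. x (Suc i)) \<and> a1 * x 0 \<in> SSet g'' h)"
    using G0x g'' by blast
next
  assume g: "g \<in> G0 p" and R: "Good (x 0) \<and> (\<exists>g''. g'' \<in> G0 p \<and> Pg n g g'' (\<lambda>i. x (Suc i)) \<and> a1 * x 0 \<in> SSet g'' h)"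
  then obtain g'' where g'': "g'' \<in> G0 p" "Pg n g g'' (\<lambda>i. x (Suc i))" "a1 * x 0 \<in> SSet g'' h" and G0x: "Good (x 0)"
    by blast
  have "ftil p f (x 0) g'' = h" using ftil_char[OF g''(1) G0x] g''(3) by (simp add: SSet_def)
  moreover have "\<forall>i<Suc n. Good (x i)" using G0x g''(2) by (auto simp: Pg_def less_Suc_eq_0_disj)
  ultimately show "Pg (Suc n) g h x" using g''(2) by (simp add: Pg_def)
qed

lemma shft1_meas[measurable]: "(\<lambda>x i. x (Suc i)) \<in> \<Omega>' \<rightarrow>\<^sub>M \<Omega>'"
  by (rule measurable_PiM_single') (auto simp: space_PiM)

lemma Pg_meas: "g \<in> G0 p \<Longrightarrow> Measurable.pred \<Omega>' (Pg n g h)"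
proof (induction n arbitrary: h)
  case 0
  have "Pg 0 g h = (\<lambda>x. g = h)" by (auto simp: Pg_def)
  then show ?case by simp
next
  case (Suc n)
  have eq: "Pg (Suc n) g h = (\<lambda>x. Good (x 0) \<and> (\<exists>g''\<in>G0 p. Pg n g g'' (\<lambda>i. x (Suc i)) \<and> a1 * x 0 \<in> SSet g'' h))"
    by (intro ext) (simp only: Pg_Suc[OF Suc.prems] Bex_def)
  have m: "Measurable.pred \<Omega>' (\<lambda>x. Pg n g g'' (\<lambda>i. x (Suc i)) \<and> a1 * x 0 \<in> SSet g'' h)" if g'': "g'' \<in> G0 p" for g''
  proof -
    note [measurable] = Suc.IH[OF Suc.prems] SSet_borel[OF g'']
    show ?thesis by measurable
  qed
  have A: "Measurable.pred \<Omega>' (\<lambda>x. Good (x 0))" by measurable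
  have B: "Measurable.pred \<Omega>' (\<lambda>x. \<exists>g''\<in>G0 p. Pg n g g'' (\<lambda>i. x (Suc i)) \<and> a1 * x 0 \<in> SSet g'' h)"
    by (rule pred_intros_countable_bounded(4)) (rule m)
  show ?case unfolding eq by (rule pred_intros_logic(3)[OF A B])
qed

end

context iidU begin

lemma depD: "dep P n \<Longrightarrow> \<forall>i<n. x i = y i \<Longrightarrow> P x = P y"
  unfolding dep_def by blast

lemma ext_meas: "(\<lambda>y i. if i < s then y i else (0::real)) \<in> PiM {..<s} (\<lambda>_. borel) \<rightarrow>\<^sub>M \<Omega>"
proof (rule measurable_PiM_single')
  fix i :: nat
  show "(\<lambda>\<omega>. if i < s then \<omega> i else 0) \<in> borel_measurable (PiM {..<s} (\<lambda>_. borel))"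
    by (cases "i < s") (auto intro: measurable_component_singleton)
qed (auto simp: space_PiM)

lemma prob_fin:
  assumes h: "inj h" and s: "0 < s" and P: "Measurable.pred \<Omega> P" and d: "dep P s"
  shows "prob {\<omega> \<in> space M. P (\<lambda>i. U (h i) \<omega>)} =
     measure (PiM {..<s} (\<lambda>_. uni)) {y \<in> space (PiM {..<s} (\<lambda>_. borel::real measure)). P (\<lambda>i. if i < s then y i else 0)}"
proof -
  define ext where "ext y = (\<lambda>i. if i < s then y i else (0::real))" for y :: "nat \<Rightarrow> real"
  have ind: "indep_vars (\<lambda>_. borel) (\<lambda>i. U (h i)) {..<s}"
    using indep_vars_reindex[of "\<lambda>_. borel" U h "{..<s}"] indep_vars_subset[OF indepU] h
    by (auto simp: inj_on_def inj_def)
  have D: "distr M (PiM {..<s} (\<lambda>_. borel)) (\<lambda>\<omega>. \<lambda>i\<in>{..<s}. U (h i) \<omega>) = PiM {..<s} (\<lambda>_. uni)"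
  proof -
    have ne: "{..<s} \<noteq> {}" using s by auto
    have "distr M (PiM {..<s} (\<lambda>_. borel)) (\<lambda>\<omega>. \<lambda>i\<in>{..<s}. U (h i) \<omega>) = (PiM {..<s} (\<lambda>i. distr M borel (U (h i))))"
      by (rule indep_vars_iff_distr_eq_PiM[THEN iffD1, OF ne _ ind]) simp
    then show ?thesis by (simp only: unifU)
  qed
  have m: "(\<lambda>\<omega>. \<lambda>i\<in>{..<s}. U (h i) \<omega>) \<in> M \<rightarrow>\<^sub>M PiM {..<s} (\<lambda>_. borel)"
    by (rule measurable_restrict) auto
  define X where "X = {y \<in> space (PiM {..<s} (\<lambda>_. borel::real measure)). P (ext y)}"
  have X: "X \<in> sets (PiM {..<s} (\<lambda>_. borel))"
    unfolding X_def ext_def using measurable_compose[OF ext_meas P] by (simp add: pred_def)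
  have "measure (PiM {..<s} (\<lambda>_. uni)) X = prob ((\<lambda>\<omega>. \<lambda>i\<in>{..<s}. U (h i) \<omega>) -` X \<inter> space M)"
    unfolding D[symmetric] using X m by (subst measure_distr) auto
  also have "(\<lambda>\<omega>. \<lambda>i\<in>{..<s}. U (h i) \<omega>) -` X \<inter> space M = {\<omega> \<in> space M. P (\<lambda>i. U (h i) \<omega>)}"
  proof -
    have "P (ext (\<lambda>i\<in>{..<s}. U (h i) \<omega>)) = P (\<lambda>i. U (h i) \<omega>)" for \<omega>
    proof -
      have "\<forall>i<s. ext (\<lambda>i\<in>{..<s}. U (h i) \<omega>) i = U (h i) \<omega>" by (simp add: ext_def)
      then show ?thesis by (rule depD[OF d])
    qed
    moreover have "(\<lambda>i\<in>{..<s}. U (h i) \<omega>) \<in> space (PiM {..<s} (\<lambda>_. borel::real measure))" for \<omega>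
      by (simp add: space_PiM)
    ultimately show ?thesis unfolding X_def by auto
  qed
  finally show ?thesis unfolding X_def ext_def by simp
qed

end

locale full = iidU M U + coup p f for M :: "'a measure" and U and p :: "'g::countable \<Rightarrow> (nat \<Rightarrow> 'g) \<Rightarrow> real" and f +
  fixes s :: nat
  assumes s1: "s \<ge> 1" and nsumA: "\<not> summable (\<lambda>n. \<Prod>m = 1..Suc n. aS p m)"
    and cond2: "measure M {\<omega> \<in> space M. (\<lambda>i. U (int s - 1 - int i) \<omega>) \<in> E p f s} > 0"
begin

definition "Ehat x \<longleftrightarrow> (\<forall>i<s. Good (x i)) \<and> (\<forall>g\<in>G0 p. \<forall>g'\<in>G0 p. fiter p f s x g = fiter p f s x g')"

lemma Ehat_alt: "Ehat x \<longleftrightarrow> (\<forall>i<s. Good (x i)) \<and> (\<forall>g\<in>G0 p. \<forall>g'\<in>G0 p. \<forall>h. Pg s g h x = Pg s g' h x)"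
proof
  assume A: "Ehat x"
  have "Pg s g h x = Pg s g' h x" if "g \<in> G0 p" "g' \<in> G0 p" for g g' h
  proof -
    have "fiter p f s x g = fiter p f s x g'" using A that unfolding Ehat_def by blast
    then show ?thesis unfolding Pg_def by simp
  qed
  then show "(\<forall>i<s. Good (x i)) \<and> (\<forall>g\<in>G0 p. \<forall>g'\<in>G0 p. \<forall>h. Pg s g h x = Pg s g' h x)"
    using A unfolding Ehat_def by blast
next
  assume A: "(\<forall>i<s. Good (x i)) \<and> (\<forall>g\<in>G0 p. \<forall>g'\<in>G0 p. \<forall>h. Pg s g h x = Pg s g' h x)"
  have "fiter p f s x g = fiter p f s x g'" if "g \<in> G0 p" "g' \<in> G0 p" for g g'
  proof -
    have "Pg s g (fiter p f s x g) x = Pg s g' (fiter p f s x g) x" using A that by blast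
    then show ?thesis using A unfolding Pg_def by simp
  qed
  then show "Ehat x" using A unfolding Ehat_def by blast
qed

lemma Ehat_meas[measurable]: "Measurable.pred \<Omega> Ehat"
proof -
  have m1: "Measurable.pred \<Omega> (\<lambda>x. \<forall>i<s. Good (x i))" by measurable
  have m2: "Measurable.pred \<Omega> (\<lambda>x. \<forall>g\<in>G0 p. \<forall>g'\<in>G0 p. \<forall>h. Pg s g h x = Pg s g' h x)"
  proof (rule pred_intros_countable_bounded(3))
    fix g assume g: "g \<in> G0 p"
    show "Measurable.pred \<Omega> (\<lambda>x. \<forall>g'\<in>G0 p. \<forall>h. Pg s g h x = Pg s g' h x)"
    proof (rule pred_intros_countable_bounded(3))
      fix g' assume g': "g' \<in> G0 p"
      show "Measurable.pred \<Omega> (\<lambda>x. \<forall>h. Pg s g h x = Pg s g' h x)"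
      proof (rule pred_intros_countable(1))
        fix h
        show "Measurable.pred \<Omega> (\<lambda>x. Pg s g h x = Pg s g' h x)"
          by (rule pred_intros_logic(6)) (rule Pg_meas[OF g], rule Pg_meas[OF g'])
      qed
    qed
  qed
  have eq: "Ehat = (\<lambda>x. (\<forall>i<s. Good (x i)) \<and> (\<forall>g\<in>G0 p. \<forall>g'\<in>G0 p. \<forall>h. Pg s g h x = Pg s g' h x))"
    by (intro ext) (rule Ehat_alt)
  show ?thesis unfolding eq by (rule pred_intros_logic(3)[OF m1 m2])
qed

lemma Ehat_dep: "dep Ehat s"
  unfolding dep_def
proof (intro allI impI)
  fix x y :: "nat \<Rightarrow> real" assume xy: "\<forall>i<s. x i = y i"
  have "fiter p f s x g = fiter p f s y g" for g by (rule fiter_dep) (use xy in simp)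
  moreover have "(\<forall>i<s. Good (x i)) = (\<forall>i<s. Good (y i))" using xy by simp
  ultimately show "Ehat x = Ehat y" unfolding Ehat_def by simp
qed

definition "Bg x \<longleftrightarrow> Ehat (\<lambda>i. x i / a1)"

lemma scale_meas[measurable]: "(\<lambda>x i. x i / a1) \<in> \<Omega> \<rightarrow>\<^sub>M \<Omega>"
  by (rule measurable_PiM_single') (auto simp: space_PiM intro!: measurable_component_singleton)

lemma Bg_meas[measurable]: "Measurable.pred \<Omega> Bg"
  unfolding Bg_def using measurable_compose[OF scale_meas Ehat_meas] by (simp add: pred_def comp_def)

lemma Bg_dep: "dep Bg s"
  unfolding dep_def Bg_def
proof (intro allI impI)
  fix x y :: "nat \<Rightarrow> real" assume xy: "\<forall>i<s. x i = y i"
  then have "\<forall>i<s. x i / a1 = y i / a1" by simp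
  then show "Ehat (\<lambda>i. x i / a1) = Ehat (\<lambda>i. y i / a1)" by (rule depD[OF Ehat_dep])
qed

lemma Bg_E: "Bg x \<Longrightarrow> (\<lambda>i. x i / a1) \<in> E p f s"
proof -
  assume "Bg x"
  then have A: "\<forall>i<s. Good (x i / a1)" "\<forall>g\<in>G0 p. \<forall>g'\<in>G0 p. fiter p f s (\<lambda>i. x i / a1) g = fiter p f s (\<lambda>i. x i / a1) g'"
    unfolding Bg_def Ehat_def by blast+
  have "\<forall>i<s. 0 \<le> x i / a1 \<and> x i / a1 < 1" using A(1) unfolding Good_def by blast
  then show ?thesis using A(2) unfolding E_def by blast
qed

lemma E_Ehat: "v \<in> E p f s \<Longrightarrow> (\<forall>i<s. Good (v i)) \<Longrightarrow> Ehat v"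
  unfolding Ehat_def E_def by blast

lemma notGood_null: "prob {\<omega> \<in> space M. \<not> Good (U j \<omega>)} = 0"
proof -
  have sub: "{0..<1} \<inter> {u. \<not> Good u} \<subseteq> (\<lambda>y. y / a1) ` Dset"
  proof
    fix u assume "u \<in> {0..<1} \<inter> {u. \<not> Good u}"
    then have "a1 * u \<in> Dset" by (auto simp: Good_def)
    moreover have "u = (a1 * u) / a1" using a1_pos by simp
    ultimately show "u \<in> (\<lambda>y. y / a1) ` Dset" by blast
  qed
  have null: "(\<lambda>y. y / a1) ` Dset \<in> null_sets lborel"
    by (rule countable_imp_null_set_lborel) (simp add: Dset_countable)
  have nb: "{0..<1} \<inter> {u. \<not> Good u} \<in> sets lborel" by simp
  have "{0..<1} \<inter> {u. \<not> Good u} \<in> null_sets lborel" by (rule null_sets_subset[OF null nb sub])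
  then have z: "emeasure lborel ({0..<1} \<inter> {u. \<not> Good u}) = 0" by (rule null_setsD1)
  have "prob {\<omega> \<in> space M. \<not> Good (U j \<omega>)} = prob (U j -` {u. \<not> Good u} \<inter> space M)"
    by (intro arg_cong[where f=prob]) auto
  also have "\<dots> = measure (distr M borel (U j)) {u. \<not> Good u}" by (subst measure_distr) auto
  also have "\<dots> = measure uni {u. \<not> Good u}" by (simp add: unifU)
  also have "\<dots> = 0" unfolding measure_def using uni_emeasure[of "{u. \<not> Good u}"] z by simp
  finally show ?thesis .
qed

definition "Yv \<omega> = (\<lambda>i. U (int s - 1 - int i) \<omega>)"

lemma Yv_meas[measurable]: "Yv \<in> M \<rightarrow>\<^sub>M \<Omega>"
  unfolding Yv_def by (rule measurable_PiM_single') (auto simp: space_PiM)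

lemma Ehat_pos: "prob {\<omega> \<in> space M. Ehat (Yv \<omega>)} > 0"
proof -
  define A where "A = {\<omega> \<in> space M. Yv \<omega> \<in> E p f s}"
  have Apos: "prob A > 0" using cond2 by (simp add: A_def Yv_def)
  then have Aev: "A \<in> events" using measure_notin_sets[of A M] by auto
  define B where "B = {\<omega> \<in> space M. Ehat (Yv \<omega>)}"
  have Bev: "B \<in> events" unfolding B_def by measurable
  define N where "N = (\<Union>i\<in>{..<s}. {\<omega> \<in> space M. \<not> Good (U (int s - 1 - int i) \<omega>)})"
  have Nev: "N \<in> events" unfolding N_def by measurable
  have "prob N \<le> (\<Sum>i\<in>{..<s}. prob {\<omega> \<in> space M. \<not> Good (U (int s - 1 - int i) \<omega>)})"
    unfolding N_def by (rule finite_measure_subadditive_finite) auto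
  also have "\<dots> = 0" by (simp add: notGood_null)
  finally have N0: "prob N = 0" using measure_nonneg[of M N] by linarith
  have "A \<subseteq> B \<union> N"
  proof
    fix \<omega> assume w: "\<omega> \<in> A"
    show "\<omega> \<in> B \<union> N"
    proof (cases "\<omega> \<in> N")
      case False
      then have "\<forall>i<s. Good (Yv \<omega> i)" using w unfolding N_def A_def Yv_def by auto
      then have "Ehat (Yv \<omega>)" using w unfolding A_def by (intro E_Ehat) auto
      then show ?thesis using w unfolding A_def B_def by auto
    qed simp
  qed
  then have "prob A \<le> prob (B \<union> N)" using Bev Nev by (intro finite_measure_mono) auto
  also have "\<dots> \<le> prob B + prob N" using Bev Nev by (rule measure_Un_le)
  finally show ?thesis using Apos N0 by (simp add: B_def)
qed

lemma Bg_pos: "mu Bg > 0"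
proof -
  let ?\<nu> = "PiM {..<s} (\<lambda>_. uni)"
  let ?\<nu>b = "PiM {..<s} (\<lambda>_. borel :: real measure)"
  define ext where "ext y = (\<lambda>i. if i < s then y i else (0::real))" for y :: "nat \<Rightarrow> real"
  have s0: "0 < s" using s1 by simp
  have inj1: "inj (\<lambda>i::nat. int s - 1 - int i)" by (auto simp: inj_def)
  have inj2: "inj (\<lambda>i::nat. - int i)" by (auto simp: inj_def)
  define X where "X = {y \<in> space ?\<nu>b. Ehat (ext y)}"
  have X: "X \<in> sets ?\<nu>b"
    unfolding X_def ext_def using measurable_compose[OF ext_meas Ehat_meas] by (simp add: pred_def)
  have PB: "prob {\<omega> \<in> space M. Ehat (Yv \<omega>)} = measure ?\<nu> X"
    unfolding Yv_def X_def ext_def by (rule prob_fin[OF inj1 s0 Ehat_meas Ehat_dep])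
  have "mu Bg = prob {\<omega> \<in> space M. Bg (\<lambda>i. U (- int i) \<omega>)}"
    by (simp add: mu_def sq_def)
  also have "\<dots> = measure ?\<nu> {y \<in> space ?\<nu>b. Bg (ext y)}"
    unfolding ext_def by (rule prob_fin[OF inj2 s0 Bg_meas Bg_dep])
  also have "{y \<in> space ?\<nu>b. Bg (ext y)} = {y \<in> space ?\<nu>. (\<forall>i<s. y i < a1) \<and> (\<lambda>i\<in>{..<s}. y i / a1) \<in> X}"
  proof (intro set_eqI iffI)
    fix y assume "y \<in> {y \<in> space ?\<nu>b. Bg (ext y)}"
    then have y: "y \<in> space ?\<nu>b" "Ehat (\<lambda>i. ext y i / a1)" by (auto simp: Bg_def)
    have eq: "Ehat (ext (\<lambda>i\<in>{..<s}. y i / a1)) = Ehat (\<lambda>i. ext y i / a1)"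
      by (rule depD[OF Ehat_dep]) (simp add: ext_def)
    have "\<forall>i<s. Good (ext y i / a1)" using y(2) by (simp add: Ehat_def)
    then have lt: "\<forall>i<s. y i < a1" using a1_pos by (auto simp: Good_def ext_def divide_less_eq)
    have "(\<lambda>i\<in>{..<s}. y i / a1) \<in> space ?\<nu>b" by (simp add: space_PiM)
    then show "y \<in> {y \<in> space ?\<nu>. (\<forall>i<s. y i < a1) \<and> (\<lambda>i\<in>{..<s}. y i / a1) \<in> X}"
      using y eq lt by (auto simp: X_def space_PiM)
  next
    fix y assume "y \<in> {y \<in> space ?\<nu>. (\<forall>i<s. y i < a1) \<and> (\<lambda>i\<in>{..<s}. y i / a1) \<in> X}"
    then have y: "y \<in> space ?\<nu>b" "Ehat (ext (\<lambda>i\<in>{..<s}. y i / a1))" by (auto simp: X_def space_PiM)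
    have eq: "Ehat (ext (\<lambda>i\<in>{..<s}. y i / a1)) = Ehat (\<lambda>i. ext y i / a1)"
      by (rule depD[OF Ehat_dep]) (simp add: ext_def)
    then show "y \<in> {y \<in> space ?\<nu>b. Bg (ext y)}" using y by (simp add: Bg_def)
  qed
  also have "measure ?\<nu> {y \<in> space ?\<nu>. (\<forall>i<s. y i < a1) \<and> (\<lambda>i\<in>{..<s}. y i / a1) \<in> X} = a1 ^ s * measure ?\<nu> X"
  proof -
    have "emeasure ?\<nu> {y \<in> space ?\<nu>. (\<forall>i<s. y i < a1) \<and> (\<lambda>i\<in>{..<s}. y i / a1) \<in> X} = ennreal (a1 ^ s) * emeasure ?\<nu> X"
      by (rule scale_fin[OF a1_pos a_le1 X])
    then show ?thesis unfolding measure_def using a1_pos by (simp add: enn2real_mult)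
  qed
  finally have "mu Bg = a1 ^ s * prob {\<omega> \<in> space M. Ehat (Yv \<omega>)}" using PB by simp
  then show ?thesis using Ehat_pos a1_pos by simp
qed

lemma renewal_inst: "renewal M U (aS p) s Bg"
  by unfold_locales (use a_mono a1_pos a_le1 nsumA Bg_meas Bg_dep s1 Bg_pos in auto)

lemma AE_success: "AE \<omega> in M. \<exists>k\<ge>1. renewal.Cn (aS p) k (sq 0 \<omega>) \<and> Bg (sq k \<omega>)"
proof -
  interpret R: renewal M U "aS p" s Bg by (rule renewal_inst)
  define N where "N = {\<omega> \<in> space M. (\<lambda>x. \<forall>k. k \<ge> 1 \<longrightarrow> \<not> (R.Cn k x \<and> Bg (shft k x))) (sq 0 \<omega>)}"
  have m: "Measurable.pred \<Omega> (\<lambda>x. \<forall>k. k \<ge> 1 \<longrightarrow> \<not> (R.Cn k x \<and> Bg (shft k x)))" by measurable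
  have Nev: "N \<in> events" unfolding N_def by (rule ev_sets[OF m])
  have "prob N = 0" using R.main_renewal unfolding N_def mu_def by simp
  moreover have "emeasure M N = ennreal (prob N)" by (rule emeasure_eq_measure)
  ultimately have "emeasure M N = 0" by simp
  then have "N \<in> null_sets M" using Nev by (rule null_setsI)
  moreover have "{\<omega> \<in> space M. \<not> (\<exists>k\<ge>1. R.Cn k (sq 0 \<omega>) \<and> Bg (sq k \<omega>))} \<subseteq> N"
    unfolding N_def by (auto simp: sq_shft[symmetric])
  ultimately show ?thesis by (rule AE_I')
qed

lemma tau0_finite:
  assumes k: "k \<ge> 1" and C: "renewal.Cn (aS p) k (sq 0 \<omega>)" and B: "Bg (sq k \<omega>)"
  shows "\<bar>tau0 p f U \<omega>\<bar> \<noteq> \<infinity>"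
proof -
  define S where "S = {m. m < 0 \<and> (\<exists>l. m \<le> l \<and> l \<le> 0 \<and>
        (\<lambda>i. U (l - int i) \<omega> / aS p 1) \<in> E p f (nat (l - m + 1)) \<and>
        (l < 0 \<longrightarrow> (\<forall>j. l + 1 \<le> j \<and> j \<le> 0 \<longrightarrow> int (Kfun p (U j \<omega>)) \<le> j - l)))}"
  define l :: int where "l = - int k"
  define m0 :: int where "m0 = - int k - int s + 1"
  have "m0 \<in> S"
    unfolding S_def mem_Collect_eq
  proof (intro conjI exI[of _ l])
    show "m0 < 0" "m0 \<le> l" "l \<le> 0" using k s1 by (auto simp: m0_def l_def)
    have n: "nat (l - m0 + 1) = s" by (simp add: l_def m0_def)
    have "(\<lambda>i. sq k \<omega> i / a1) \<in> E p f s" by (rule Bg_E[OF B])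
    moreover have "(\<lambda>i. U (l - int i) \<omega> / aS p 1) = (\<lambda>i. sq k \<omega> i / a1)"
    proof (rule ext)
      fix i
      have "l - int i = - int (k + i)" by (simp add: l_def)
      then show "U (l - int i) \<omega> / aS p 1 = sq k \<omega> i / a1" by (simp add: sq_def)
    qed
    ultimately show "(\<lambda>i. U (l - int i) \<omega> / aS p 1) \<in> E p f (nat (l - m0 + 1))" using n by simp
    show "l < 0 \<longrightarrow> (\<forall>j. l + 1 \<le> j \<and> j \<le> 0 \<longrightarrow> int (Kfun p (U j \<omega>)) \<le> j - l)"
    proof (intro impI allI)
      fix j assume j: "l + 1 \<le> j \<and> j \<le> 0"
      define i where "i = nat (- j)"
      have i: "i < k" "j = - int i" using j k by (auto simp: i_def l_def)
      have "sq 0 \<omega> i < aS p (k - i)" using C i unfolding renewal.Cn_def[OF renewal_inst] by blast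
      then have "U j \<omega> < aS p (k - i)" using i by (simp add: sq_def)
      then have "Kfun p (U j \<omega>) \<le> k - i" unfolding Kfun_def by (rule Least_le)
      then show "int (Kfun p (U j \<omega>)) \<le> j - l" using i by (simp add: l_def)
    qed
  qed
  have up: "x \<le> ereal (-1)" if "x \<in> ereal ` real_of_int ` S" for x
    using that by (auto simp: S_def)
  have T: "tau0 p f U \<omega> = Sup (ereal ` real_of_int ` S)" unfolding tau0_def S_def by (rule refl)
  have lo: "ereal (real_of_int m0) \<le> tau0 p f U \<omega>"
    unfolding T using \<open>m0 \<in> S\<close> by (intro Sup_upper imageI)
  have hi: "tau0 p f U \<omega> \<le> ereal (-1)" unfolding T by (rule Sup_least) (rule up)
  show ?thesis
  proof (cases "tau0 p f U \<omega>")
    case (real r) then show ?thesis by simp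
  next
    case PInf then show ?thesis using hi by simp
  next
    case MInf then show ?thesis using lo by simp
  qed
qed

lemma final: "AE \<omega> in M. \<bar>tau0 p f U \<omega>\<bar> \<noteq> \<infinity>"
  using AE_success
proof eventually_elim
  case (elim \<omega>)
  then obtain k where "k \<ge> 1" "renewal.Cn (aS p) k (sq 0 \<omega>)" "Bg (sq k \<omega>)" by blast
  then show ?case by (rule tau0_finite)
qed

end

theorem theorem2:
  fixes p :: "'g::countable \<Rightarrow> (nat \<Rightarrow> 'g) \<Rightarrow> real"
    and f :: "real \<Rightarrow> (nat \<Rightarrow> 'g) \<Rightarrow> 'g"
    and M :: "'a measure"
    and U :: "int \<Rightarrow> 'a \<Rightarrow> real"
  assumes p_nonneg: "\<forall>g w. 0 \<le> p g w"
    and p_sum: "\<forall>w. ((\<lambda>g. p g w) has_sum 1) UNIV"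
    and p_meas: "\<forall>g. p g \<in> borel_measurable (Pi\<^sub>M UNIV (\<lambda>_. count_space UNIV))"
    and f_max: "max_coupling p f"
    and a1_pos: "aS p 1 > 0"
    and a_mono: "mono (aS p)"
    and a_lim: "aS p \<longlonglongrightarrow> 1"
    and M_prob: "prob_space M"
    and U_indep: "prob_space.indep_vars M (\<lambda>_. borel) U UNIV"
    and U_unif: "\<forall>i. distr M borel (U i) = uniform_measure lborel {0..<1}"
    and cond_i: "\<not> summable (\<lambda>n. \<Prod>m = 1..Suc n. aS p m)"
    and cond_ii: "\<exists>s::nat. s \<ge> 1 \<and>
        measure M {\<omega> \<in> space M. (\<lambda>i. U (int s - 1 - int i) \<omega>) \<in> E p f s} > 0"
  shows "AE \<omega> in M. \<bar>tau0 p f U \<omega>\<bar> \<noteq> \<infinity>"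
  proof -
  obtain s where s: "s \<ge> 1" "measure M {\<omega> \<in> space M. (\<lambda>i. U (int s - 1 - int i) \<omega>) \<in> E p f s} > 0"
    using cond_ii by blast
  have ps: "prob_space M" by (rule M_prob)
  have iid: "iidU M U"
    by (intro iidU.intro iidU_axioms.intro ps) (use U_indep U_unif in simp_all)
  have cp: "coup p f"
    by (intro coup.intro) (use p_nonneg f_max a1_pos a_mono a_lim in simp_all)
  have fl: "full M U p f s"
    by (intro full.intro iid cp full_axioms.intro) (use s cond_i in simp_all)
  show ?thesis by (rule full.final[OF fl])
qed

end
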